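(* Let $A$ be a ring with Jacobson radical $J$. Then $A$ is left arithmetical and semilocal if and only if $A/J$ is finite and $J$ is finitely generated as a left $A$-module.
   Context: A ring $A$ is called left arithmetical if: (a) every simple left $A$-module has finitely many elements; (b) every simple left $A$-module is finitely presented; (c) for every positive integer $n$, there are only finitely many isomorphism classes of simple left $A$-modules with exactly $n$ elements. A ring $A$ with Jacobson radical $J$ is semilocal if $A/J$ is Artinian (semisimple). *)

theory Defs
  imports "HOL-Algebra.QuotRing" "HOL-Algebra.Module"
begin

definition left_module :: "('a, 'm) ring_scheme \<Rightarrow> ('a, 'b, 'n) module_scheme \<Rightarrow> bool" where
  "left_module R M \<longleftrightarrow> ring R \<and> abelian_group M \<and>
     (\<forall>a \<in> carrier R. \<forall>x \<in> carrier M. a \<odot>\<^bsub>M\<^esub> x \<in> carrier M) \<and>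
     (\<forall>a \<in> carrier R. \<forall>b \<in> carrier R. \<forall>x \<in> carrier M.
        (a \<oplus>\<^bsub>R\<^esub> b) \<odot>\<^bsub>M\<^esub> x = a \<odot>\<^bsub>M\<^esub> x \<oplus>\<^bsub>M\<^esub> b \<odot>\<^bsub>M\<^esub> x) \<and>
     (\<forall>a \<in> carrier R. \<forall>x \<in> carrier M. \<forall>y \<in> carrier M.
        a \<odot>\<^bsub>M\<^esub> (x \<oplus>\<^bsub>M\<^esub> y) = a \<odot>\<^bsub>M\<^esub> x \<oplus>\<^bsub>M\<^esub> a \<odot>\<^bsub>M\<^esub> y) \<and>
     (\<forall>a \<in> carrier R. \<forall>b \<in> carrier R. \<forall>x \<in> carrier M.
        (a \<otimes>\<^bsub>R\<^esub> b) \<odot>\<^bsub>M\<^esub> x = a \<odot>\<^bsub>M\<^esub> (b \<odot>\<^bsub>M\<^esub> x)) \<and>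
     (\<forall>x \<in> carrier M. \<one>\<^bsub>R\<^esub> \<odot>\<^bsub>M\<^esub> x = x)"

definition submodule :: "('a, 'm) ring_scheme \<Rightarrow> ('a, 'b, 'n) module_scheme \<Rightarrow> 'b set \<Rightarrow> bool" where
  "submodule R M N \<longleftrightarrow> N \<subseteq> carrier M \<and> additive_subgroup N M \<and>
     (\<forall>a \<in> carrier R. \<forall>x \<in> N. a \<odot>\<^bsub>M\<^esub> x \<in> N)"

definition mod_span :: "('a, 'm) ring_scheme \<Rightarrow> ('a, 'b, 'n) module_scheme \<Rightarrow> 'b set \<Rightarrow> 'b set" where
  "mod_span R M S = carrier M \<inter> \<Inter> {N. submodule R M N \<and> S \<subseteq> N}"

definition fin_gen_submodule :: "('a, 'm) ring_scheme \<Rightarrow> ('a, 'b, 'n) module_scheme \<Rightarrow> 'b set \<Rightarrow> bool" where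
  "fin_gen_submodule R M N \<longleftrightarrow> (\<exists>S. finite S \<and> S \<subseteq> N \<and> mod_span R M S = N)"

definition mod_hom :: "('a, 'm) ring_scheme \<Rightarrow> ('a, 'b, 'n) module_scheme \<Rightarrow> ('a, 'c, 'k) module_scheme
    \<Rightarrow> ('b \<Rightarrow> 'c) set" where
  "mod_hom R M N = {f. f \<in> carrier M \<rightarrow> carrier N \<and>
     (\<forall>x \<in> carrier M. \<forall>y \<in> carrier M. f (x \<oplus>\<^bsub>M\<^esub> y) = f x \<oplus>\<^bsub>N\<^esub> f y) \<and>
     (\<forall>a \<in> carrier R. \<forall>x \<in> carrier M. f (a \<odot>\<^bsub>M\<^esub> x) = a \<odot>\<^bsub>N\<^esub> f x)}"

definition mod_kernel :: "('a, 'b, 'n) module_scheme \<Rightarrow> ('a, 'c, 'k) module_scheme \<Rightarrow> ('b \<Rightarrow> 'c) \<Rightarrow> 'b set" where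
  "mod_kernel M N f = {x \<in> carrier M. f x = \<zero>\<^bsub>N\<^esub>}"

definition mod_iso :: "('a, 'm) ring_scheme \<Rightarrow> ('a, 'b, 'n) module_scheme \<Rightarrow> ('a, 'c, 'k) module_scheme \<Rightarrow> bool" where
  "mod_iso R M N \<longleftrightarrow> (\<exists>f \<in> mod_hom R M N. bij_betw f (carrier M) (carrier N))"

text \<open>Only the additive structure and the scalar multiplication matter; the ring
  multiplication/one fields of the record are irrelevant dummies.\<close>
definition free_module :: "('a, 'm) ring_scheme \<Rightarrow> nat \<Rightarrow> ('a, nat \<Rightarrow> 'a) module" where
  "free_module R n =
    \<lparr>carrier = {v. (\<forall>i<n. v i \<in> carrier R) \<and> (\<forall>i\<ge>n. v i = \<zero>\<^bsub>R\<^esub>)},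
     mult = (\<lambda>v w i. \<zero>\<^bsub>R\<^esub>), one = (\<lambda>i. \<zero>\<^bsub>R\<^esub>),
     zero = (\<lambda>i. \<zero>\<^bsub>R\<^esub>),
     add = (\<lambda>v w i. v i \<oplus>\<^bsub>R\<^esub> w i),
     smult = (\<lambda>a v i. a \<otimes>\<^bsub>R\<^esub> v i)\<rparr>"

definition finitely_presented :: "('a, 'm) ring_scheme \<Rightarrow> ('a, 'b, 'n) module_scheme \<Rightarrow> bool" where
  "finitely_presented R M \<longleftrightarrow>
     (\<exists>n f. f \<in> mod_hom R (free_module R n) M \<and>
            f ` carrier (free_module R n) = carrier M \<and>
            fin_gen_submodule R (free_module R n) (mod_kernel (free_module R n) M f))"

definition simple_module :: "('a, 'm) ring_scheme \<Rightarrow> ('a, 'b, 'n) module_scheme \<Rightarrow> bool" where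
  "simple_module R M \<longleftrightarrow> left_module R M \<and> carrier M \<noteq> {\<zero>\<^bsub>M\<^esub>} \<and>
     (\<forall>N. submodule R M N \<longrightarrow> N = {\<zero>\<^bsub>M\<^esub>} \<or> N = carrier M)"

definition regular_module :: "('a, 'm) ring_scheme \<Rightarrow> ('a, 'a) module" where
  "regular_module R = \<lparr>carrier = carrier R, mult = mult R, one = one R, zero = zero R,
     add = add R, smult = mult R\<rparr>"

definition maximal_left_ideal :: "('a, 'm) ring_scheme \<Rightarrow> 'a set \<Rightarrow> bool" where
  "maximal_left_ideal R I \<longleftrightarrow> submodule R (regular_module R) I \<and> I \<noteq> carrier R \<and>
     (\<forall>K. submodule R (regular_module R) K \<and> I \<subseteq> K \<longrightarrow> K = I \<or> K = carrier R)"

definition jacobson_radical :: "('a, 'm) ring_scheme \<Rightarrow> 'a set" where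
  "jacobson_radical R = carrier R \<inter> \<Inter> {I. maximal_left_ideal R I}"

definition left_artinian :: "('a, 'm) ring_scheme \<Rightarrow> bool" where
  "left_artinian R \<longleftrightarrow>
     (\<forall>f :: nat \<Rightarrow> 'a set. (\<forall>n. submodule R (regular_module R) (f n)) \<and> (\<forall>n. f (Suc n) \<subseteq> f n)
        \<longrightarrow> (\<exists>N. \<forall>n\<ge>N. f n = f N))"

definition semilocal :: "('a, 'm) ring_scheme \<Rightarrow> bool" where
  "semilocal R \<longleftrightarrow> left_artinian (R Quot jacobson_radical R)"

text \<open>Every simple left module is isomorphic to \<open>R/m\<close> for a maximal
  left ideal \<open>m\<close>, whose carrier consists of subsets of the carrier of R; hence
  quantifying over modules whose elements have type \<open>'a set\<close> covers all simple
  modules up to isomorphism, and all three conditions are isomorphism invariant.\<close>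
definition left_arithmetical :: "('a, 'm) ring_scheme \<Rightarrow> bool" where
  "left_arithmetical R \<longleftrightarrow>
     (\<forall>M :: ('a, 'a set) module. simple_module R M \<longrightarrow> finite (carrier M)) \<and>
     (\<forall>M :: ('a, 'a set) module. simple_module R M \<longrightarrow> finitely_presented R M) \<and>
     (\<forall>n::nat. n > 0 \<longrightarrow>
        (\<exists>F :: ('a, 'a set) module set. finite F \<and>
           (\<forall>M :: ('a, 'a set) module. simple_module R M \<and> finite (carrier M) \<and> card (carrier M) = n
               \<longrightarrow> (\<exists>N \<in> F. mod_iso R M N))))"

end

theory Submission
  imports Defs
begin

locale lmod = ring R for R :: "('a,'m) ring_scheme" (structure) +
  fixes M :: "('a,'b,'n) module_scheme"
  assumes M_ag: "abelian_group M"
  and sm_closed: "\<lbrakk>a \<in> carrier R; x \<in> carrier M\<rbrakk> \<Longrightarrow> a \<odot>\<^bsub>M\<^esub> x \<in> carrier M"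
  and sm_ldistr: "\<lbrakk>a \<in> carrier R; b \<in> carrier R; x \<in> carrier M\<rbrakk> \<Longrightarrow>
      (a \<oplus> b) \<odot>\<^bsub>M\<^esub> x = a \<odot>\<^bsub>M\<^esub> x \<oplus>\<^bsub>M\<^esub> b \<odot>\<^bsub>M\<^esub> x"
  and sm_rdistr: "\<lbrakk>a \<in> carrier R; x \<in> carrier M; y \<in> carrier M\<rbrakk> \<Longrightarrow>
      a \<odot>\<^bsub>M\<^esub> (x \<oplus>\<^bsub>M\<^esub> y) = a \<odot>\<^bsub>M\<^esub> x \<oplus>\<^bsub>M\<^esub> a \<odot>\<^bsub>M\<^esub> y"
  and sm_assoc: "\<lbrakk>a \<in> carrier R; b \<in> carrier R; x \<in> carrier M\<rbrakk> \<Longrightarrow>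
      (a \<otimes> b) \<odot>\<^bsub>M\<^esub> x = a \<odot>\<^bsub>M\<^esub> (b \<odot>\<^bsub>M\<^esub> x)"
  and sm_one: "x \<in> carrier M \<Longrightarrow> \<one> \<odot>\<^bsub>M\<^esub> x = x"

lemma lmod_iff: "left_module R M \<longleftrightarrow> lmod R M"
  unfolding left_module_def lmod_def lmod_axioms_def by auto

sublocale lmod \<subseteq> M: abelian_group M by (rule M_ag)

context lmod begin

lemma sm_zero_l: "x \<in> carrier M \<Longrightarrow> \<zero> \<odot>\<^bsub>M\<^esub> x = \<zero>\<^bsub>M\<^esub>"
proof -
  assume x: "x \<in> carrier M"
  let ?z = "\<zero> \<odot>\<^bsub>M\<^esub> x"
  have z: "?z \<in> carrier M" using x sm_closed by simp
  have "?z \<oplus>\<^bsub>M\<^esub> ?z = ?z"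
    using sm_ldistr[of \<zero> \<zero> x] x z by simp
  then show ?thesis using z M.add.l_cancel_one[of ?z ?z] by simp
qed

lemma sm_zero_r: "a \<in> carrier R \<Longrightarrow> a \<odot>\<^bsub>M\<^esub> \<zero>\<^bsub>M\<^esub> = \<zero>\<^bsub>M\<^esub>"
proof -
  assume a: "a \<in> carrier R"
  let ?z = "a \<odot>\<^bsub>M\<^esub> \<zero>\<^bsub>M\<^esub>"
  have z: "?z \<in> carrier M" using a sm_closed by simp
  have "?z \<oplus>\<^bsub>M\<^esub> ?z = ?z"
    using sm_rdistr[of a "\<zero>\<^bsub>M\<^esub>" "\<zero>\<^bsub>M\<^esub>"] a z by simp
  then show ?thesis using z M.add.l_cancel_one[of ?z ?z] by simp
qed

lemma sm_neg: "\<lbrakk>a \<in> carrier R; x \<in> carrier M\<rbrakk> \<Longrightarrow> (\<ominus> a) \<odot>\<^bsub>M\<^esub> x = \<ominus>\<^bsub>M\<^esub> (a \<odot>\<^bsub>M\<^esub> x)"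
proof -
  assume a: "a \<in> carrier R" and x: "x \<in> carrier M"
  have "(\<ominus> a) \<odot>\<^bsub>M\<^esub> x \<oplus>\<^bsub>M\<^esub> a \<odot>\<^bsub>M\<^esub> x = (\<ominus> a \<oplus> a) \<odot>\<^bsub>M\<^esub> x"
    using sm_ldistr[of "\<ominus> a" a x] a x by simp
  also have "\<dots> = \<zero>\<^bsub>M\<^esub>" using a x sm_zero_l by (simp add: l_neg)
  finally have e: "(\<ominus> a) \<odot>\<^bsub>M\<^esub> x \<oplus>\<^bsub>M\<^esub> a \<odot>\<^bsub>M\<^esub> x = \<zero>\<^bsub>M\<^esub>" .
  show ?thesis
    using M.minus_equality[OF e] a x sm_closed by simp
qed

lemma sm_minus: "\<lbrakk>a \<in> carrier R; b \<in> carrier R; x \<in> carrier M\<rbrakk> \<Longrightarrow>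
   (a \<ominus> b) \<odot>\<^bsub>M\<^esub> x = a \<odot>\<^bsub>M\<^esub> x \<ominus>\<^bsub>M\<^esub> b \<odot>\<^bsub>M\<^esub> x"
  by (simp add: a_minus_def sm_ldistr sm_neg)

lemma neg_sm: "x \<in> carrier M \<Longrightarrow> \<ominus>\<^bsub>M\<^esub> x = (\<ominus> \<one>) \<odot>\<^bsub>M\<^esub> x"
  by (simp add: sm_neg sm_one)

lemma submodule_iff:
  "submodule R M N \<longleftrightarrow> N \<subseteq> carrier M \<and> \<zero>\<^bsub>M\<^esub> \<in> N \<and>
     (\<forall>x\<in>N. \<forall>y\<in>N. x \<oplus>\<^bsub>M\<^esub> y \<in> N) \<and> (\<forall>a\<in>carrier R. \<forall>x\<in>N. a \<odot>\<^bsub>M\<^esub> x \<in> N)"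
proof
  assume "submodule R M N"
  then show "N \<subseteq> carrier M \<and> \<zero>\<^bsub>M\<^esub> \<in> N \<and>
     (\<forall>x\<in>N. \<forall>y\<in>N. x \<oplus>\<^bsub>M\<^esub> y \<in> N) \<and> (\<forall>a\<in>carrier R. \<forall>x\<in>N. a \<odot>\<^bsub>M\<^esub> x \<in> N)"
    unfolding submodule_def
  proof (elim conjE, intro conjI)
    assume a: "additive_subgroup N M"
    show "\<zero>\<^bsub>M\<^esub> \<in> N" by (rule additive_subgroup.zero_closed[OF a])
    show "\<forall>x\<in>N. \<forall>y\<in>N. x \<oplus>\<^bsub>M\<^esub> y \<in> N" using additive_subgroup.a_closed[OF a] by blast
  qed
next
  assume H: "N \<subseteq> carrier M \<and> \<zero>\<^bsub>M\<^esub> \<in> N \<and>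
     (\<forall>x\<in>N. \<forall>y\<in>N. x \<oplus>\<^bsub>M\<^esub> y \<in> N) \<and> (\<forall>a\<in>carrier R. \<forall>x\<in>N. a \<odot>\<^bsub>M\<^esub> x \<in> N)"
  then have H1: "N \<subseteq> carrier M" and H2: "\<zero>\<^bsub>M\<^esub> \<in> N"
    and H3: "\<And>x y. x \<in> N \<Longrightarrow> y \<in> N \<Longrightarrow> x \<oplus>\<^bsub>M\<^esub> y \<in> N"
    and H4: "\<And>a x. a \<in> carrier R \<Longrightarrow> x \<in> N \<Longrightarrow> a \<odot>\<^bsub>M\<^esub> x \<in> N" by auto
  have "additive_subgroup N M"
  proof (rule additive_subgroupI, rule group.subgroupI)
    show "Group.group (add_monoid M)" by (rule M.a_group)
    show "N \<subseteq> carrier (add_monoid M)" using H1 by simp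
    show "N \<noteq> {}" using H2 by blast
    fix x y assume "x \<in> N" "y \<in> N"
    then show "x \<otimes>\<^bsub>add_monoid M\<^esub> y \<in> N" using H3 by simp
  next
    fix x assume x: "x \<in> N"
    have "inv\<^bsub>add_monoid M\<^esub> x = \<ominus>\<^bsub>M\<^esub> x" by (simp add: a_inv_def)
    also have "\<dots> = (\<ominus> \<one>) \<odot>\<^bsub>M\<^esub> x" using x H1 neg_sm by blast
    also have "\<dots> \<in> N" using H4 x by simp
    finally show "inv\<^bsub>add_monoid M\<^esub> x \<in> N" .
  qed
  then show "submodule R M N" using H1 H4 unfolding submodule_def by blast
qed

lemma carrier_submodule: "submodule R M (carrier M)"
  unfolding submodule_iff using sm_closed by auto

lemma span_submodule: "submodule R M (mod_span R M S)"
proof -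
  have F: "\<And>N. N \<in> {N. submodule R M N \<and> S \<subseteq> N} \<Longrightarrow> \<zero>\<^bsub>M\<^esub> \<in> N \<and>
     (\<forall>x\<in>N. \<forall>y\<in>N. x \<oplus>\<^bsub>M\<^esub> y \<in> N) \<and> (\<forall>a\<in>carrier R. \<forall>x\<in>N. a \<odot>\<^bsub>M\<^esub> x \<in> N)"
    by (simp add: submodule_iff)
  show ?thesis unfolding mod_span_def
  proof (rule submodule_iff[THEN iffD2], intro conjI ballI)
    show "\<zero>\<^bsub>M\<^esub> \<in> carrier M \<inter> \<Inter> {N. submodule R M N \<and> S \<subseteq> N}"
      using F by auto
  next
    fix x y assume "x \<in> carrier M \<inter> \<Inter> {N. submodule R M N \<and> S \<subseteq> N}"
       "y \<in> carrier M \<inter> \<Inter> {N. submodule R M N \<and> S \<subseteq> N}"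
    then show "x \<oplus>\<^bsub>M\<^esub> y \<in> carrier M \<inter> \<Inter> {N. submodule R M N \<and> S \<subseteq> N}"
      using F by auto
  next
    fix a x assume "a \<in> carrier R" "x \<in> carrier M \<inter> \<Inter> {N. submodule R M N \<and> S \<subseteq> N}"
    then show "a \<odot>\<^bsub>M\<^esub> x \<in> carrier M \<inter> \<Inter> {N. submodule R M N \<and> S \<subseteq> N}"
      using F sm_closed by auto
  qed auto
qed

lemma span_sub: "S \<subseteq> carrier M \<Longrightarrow> S \<subseteq> mod_span R M S"
  unfolding mod_span_def by auto

lemma span_least: "submodule R M N \<Longrightarrow> S \<subseteq> N \<Longrightarrow> mod_span R M S \<subseteq> N"
  unfolding mod_span_def by auto

lemma span_mono: "S \<subseteq> T \<Longrightarrow> mod_span R M S \<subseteq> mod_span R M T"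
  unfolding mod_span_def by auto

lemma span_carrier: "mod_span R M S \<subseteq> carrier M"
  unfolding mod_span_def by auto

end


lemma hom_zero:
  assumes M: "lmod R M" and N: "lmod R N" and f: "f \<in> mod_hom R M N"
  shows "f \<zero>\<^bsub>M\<^esub> = \<zero>\<^bsub>N\<^esub>"
proof -
  interpret M: lmod R M by fact
  interpret N: lmod R N by fact
  have c: "f \<zero>\<^bsub>M\<^esub> \<in> carrier N" using f unfolding mod_hom_def by auto
  have "f \<zero>\<^bsub>M\<^esub> = f \<zero>\<^bsub>M\<^esub> \<oplus>\<^bsub>N\<^esub> f \<zero>\<^bsub>M\<^esub>"
    using f unfolding mod_hom_def by (metis (mono_tags, lifting) M.M.zero_closed M.M.l_zero mem_Collect_eq)
  then show ?thesis using c N.M.add.l_cancel_one[of "f \<zero>\<^bsub>M\<^esub>" "f \<zero>\<^bsub>M\<^esub>"] by simp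
qed

lemma hom_preimage:
  assumes M: "lmod R M" and N: "lmod R N" and f: "f \<in> mod_hom R M N"
    and P: "submodule R N P"
  shows "submodule R M {x \<in> carrier M. f x \<in> P}"
proof -
  interpret M: lmod R M by fact
  interpret N: lmod R N by fact
  have f1: "\<And>x. x \<in> carrier M \<Longrightarrow> f x \<in> carrier N"
   and f2: "\<And>x y. x \<in> carrier M \<Longrightarrow> y \<in> carrier M \<Longrightarrow> f (x \<oplus>\<^bsub>M\<^esub> y) = f x \<oplus>\<^bsub>N\<^esub> f y"
   and f3: "\<And>a x. a \<in> carrier R \<Longrightarrow> x \<in> carrier M \<Longrightarrow> f (a \<odot>\<^bsub>M\<^esub> x) = a \<odot>\<^bsub>N\<^esub> f x"
    using f unfolding mod_hom_def by auto
  have P': "\<zero>\<^bsub>N\<^esub> \<in> P" "\<And>x y. x \<in> P \<Longrightarrow> y \<in> P \<Longrightarrow> x \<oplus>\<^bsub>N\<^esub> y \<in> P"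
     "\<And>a x. a \<in> carrier R \<Longrightarrow> x \<in> P \<Longrightarrow> a \<odot>\<^bsub>N\<^esub> x \<in> P"
    using P unfolding N.submodule_iff by auto
  show ?thesis unfolding M.submodule_iff
    using P' f2 f3 M.sm_closed hom_zero[OF M N f] by auto
qed

lemma hom_kernel:
  assumes M: "lmod R M" and N: "lmod R N" and f: "f \<in> mod_hom R M N"
  shows "submodule R M (mod_kernel M N f)"
proof -
  interpret N: lmod R N by fact
  have "submodule R N {\<zero>\<^bsub>N\<^esub>}" unfolding N.submodule_iff
    by (auto simp: N.sm_zero_r)
  from hom_preimage[OF M N f this] show ?thesis unfolding mod_kernel_def by simp
qed

lemma hom_span:
  assumes M: "lmod R M" and N: "lmod R N" and f: "f \<in> mod_hom R M N"
    and S: "S \<subseteq> carrier M"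
  shows "f ` mod_span R M S \<subseteq> mod_span R N (f ` S)"
proof -
  interpret M: lmod R M by fact
  interpret N: lmod R N by fact
  have f1: "\<And>x. x \<in> carrier M \<Longrightarrow> f x \<in> carrier N"
    using f unfolding mod_hom_def by auto
  have "submodule R M {x \<in> carrier M. f x \<in> mod_span R N (f ` S)}"
    by (rule hom_preimage[OF M N f N.span_submodule])
  moreover have "S \<subseteq> {x \<in> carrier M. f x \<in> mod_span R N (f ` S)}"
    using S f1 N.span_sub[of "f ` S"] by auto
  ultimately have "mod_span R M S \<subseteq> {x \<in> carrier M. f x \<in> mod_span R N (f ` S)}"
    by (rule M.span_least)
  then show ?thesis by auto
qed

context ring begin

lemma abs_sub: "additive_subgroup I R \<Longrightarrow> abelian_subgroup I R"
  by (rule abelian_subgroupI3[OF _ is_abelian_group])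

lemma rcos_mem:
  assumes I: "additive_subgroup I R" and a: "a \<in> carrier R"
  shows "x \<in> I +> a \<longleftrightarrow> x \<in> carrier R \<and> x \<ominus> a \<in> I"
proof -
  interpret abelian_subgroup I R by (rule abs_sub[OF I])
  show ?thesis using a_elemrcos_carrier[OF a] a_rcos_module_minus[OF ring_axioms a] by blast
qed

lemma rcos_self:
  assumes I: "additive_subgroup I R" and a: "a \<in> carrier R"
  shows "a \<in> I +> a"
proof -
  interpret abelian_subgroup I R by (rule abs_sub[OF I])
  show ?thesis using a_rcos_self[OF a] .
qed

lemma rcos_eq:
  assumes I: "additive_subgroup I R" and a: "a \<in> carrier R" and b: "b \<in> carrier R"
  shows "I +> a = I +> b \<longleftrightarrow> a \<ominus> b \<in> I"
proof -
  interpret abelian_subgroup I R by (rule abs_sub[OF I])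
  show ?thesis
  proof
    assume "I +> a = I +> b"
    then have "a \<in> I +> b" using rcos_self[OF I a] by simp
    then show "a \<ominus> b \<in> I" using rcos_mem[OF I b] by simp
  next
    assume "a \<ominus> b \<in> I"
    then have "a \<in> I +> b" using rcos_mem[OF I b] a by simp
    then show "I +> a = I +> b" using a_repr_independence'[of a b] b by simp
  qed
qed

lemma rcos_zero:
  assumes I: "additive_subgroup I R" and a: "a \<in> carrier R"
  shows "I +> a = I \<longleftrightarrow> a \<in> I"
proof -
  interpret abelian_subgroup I R by (rule abs_sub[OF I])
  have "I +> \<zero> = I" using a_rcos_const by simp
  then show ?thesis using rcos_eq[OF I a, of \<zero>] a by (simp add: a_minus_def)
qed

lemma rcos_sum:
  assumes I: "additive_subgroup I R" and a: "a \<in> carrier R" and b: "b \<in> carrier R"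
  shows "(I +> a) <+> (I +> b) = I +> (a \<oplus> b)"
proof -
  interpret abelian_subgroup I R by (rule abs_sub[OF I])
  show ?thesis using a_rcos_sum[OF a b] .
qed

lemma regular_simps[simp]: "carrier (regular_module R) = carrier R"
  "add (regular_module R) = add R" "zero (regular_module R) = zero R"
  "smult (regular_module R) = mult R"
  by (simp_all add: regular_module_def)

lemma regular_lmod: "lmod R (regular_module R)"
proof -
  have "abelian_group (regular_module R)"
    by (rule abelian_groupI) (auto simp: a_assoc a_comm a_lcomm intro: l_neg)
  then show ?thesis unfolding lmod_def lmod_axioms_def
    by (auto simp: ring_axioms l_distr r_distr m_assoc)
qed

lemma lideal_iff: "submodule R (regular_module R) I \<longleftrightarrow>
   I \<subseteq> carrier R \<and> \<zero> \<in> I \<and> (\<forall>x\<in>I. \<forall>y\<in>I. x \<oplus> y \<in> I) \<and> (\<forall>a\<in>carrier R. \<forall>x\<in>I. a \<otimes> x \<in> I)"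
  using lmod.submodule_iff[OF regular_lmod] by simp

lemma lideal_addsub: "submodule R (regular_module R) I \<Longrightarrow> additive_subgroup I R"
  unfolding submodule_def additive_subgroup_def subgroup_def regular_module_def a_inv_def m_inv_def
  by simp

end


definition Qm :: "('a,'m) ring_scheme \<Rightarrow> 'a set \<Rightarrow> ('a, 'a set) module" where
  "Qm R m = \<lparr>carrier = (\<lambda>a. m +>\<^bsub>R\<^esub> a) ` carrier R, mult = (\<lambda>X Y. X), one = m, zero = m,
     add = set_add R, smult = (\<lambda>r X. \<Union>a\<in>X. m +>\<^bsub>R\<^esub> (r \<otimes>\<^bsub>R\<^esub> a))\<rparr>"

context ring begin

lemma Q_carrier: "carrier (Qm R m) = (\<lambda>a. m +> a) ` carrier R"
  by (simp add: Qm_def)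

lemma Q_simps[simp]: "zero (Qm R m) = m" "add (Qm R m) = set_add R"
  "smult (Qm R m) = (\<lambda>r X. \<Union>a\<in>X. m +> (r \<otimes> a))"
  by (simp_all add: Qm_def)

lemma Q_mem[simp]: "a \<in> carrier R \<Longrightarrow> m +> a \<in> carrier (Qm R m)"
  by (simp add: Q_carrier)

lemma Q_elem: "X \<in> carrier (Qm R m) \<Longrightarrow> \<exists>a\<in>carrier R. X = m +> a"
  by (auto simp: Q_carrier)

lemma r_minus_distr: "\<lbrakk>r \<in> carrier R; a \<in> carrier R; b \<in> carrier R\<rbrakk> \<Longrightarrow>
  r \<otimes> (a \<ominus> b) = r \<otimes> a \<ominus> r \<otimes> b"
  by (simp add: a_minus_def r_distr r_minus)

lemma Q_smult:
  assumes L: "submodule R (regular_module R) m" and r: "r \<in> carrier R" and a: "a \<in> carrier R"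
  shows "r \<odot>\<^bsub>Qm R m\<^esub> (m +> a) = m +> (r \<otimes> a)"
proof -
  have I: "additive_subgroup m R" by (rule lideal_addsub[OF L])
  have lm: "\<And>x y. x \<in> carrier R \<Longrightarrow> y \<in> m \<Longrightarrow> x \<otimes> y \<in> m" using L unfolding lideal_iff by auto
  have H: "\<And>a'. a' \<in> m +> a \<Longrightarrow> m +> (r \<otimes> a') = m +> (r \<otimes> a)"
  proof -
    fix a' assume "a' \<in> m +> a"
    then have a': "a' \<in> carrier R" "a' \<ominus> a \<in> m" using rcos_mem[OF I a] by auto
    have "r \<otimes> a' \<ominus> r \<otimes> a = r \<otimes> (a' \<ominus> a)" using r a a'(1) r_minus_distr by simp
    also have "\<dots> \<in> m" using lm r a'(2) by simp
    finally show "m +> (r \<otimes> a') = m +> (r \<otimes> a)" using rcos_eq[OF I] r a a'(1) by simp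
  qed
  have ne: "m +> a \<noteq> {}" using rcos_self[OF I a] by blast
  have "(\<Union>a'\<in>m +> a. m +> (r \<otimes> a')) = (\<Union>a'\<in>m +> a. m +> (r \<otimes> a))"
    by (rule SUP_cong) (simp_all add: H)
  also have "\<dots> = m +> (r \<otimes> a)" using ne by simp
  finally show ?thesis by simp
qed

lemma Q_add:
  assumes L: "submodule R (regular_module R) m" and a: "a \<in> carrier R" and b: "b \<in> carrier R"
  shows "(m +> a) \<oplus>\<^bsub>Qm R m\<^esub> (m +> b) = m +> (a \<oplus> b)"
  using rcos_sum[OF lideal_addsub[OF L] a b] by simp

lemma Q_zero:
  assumes L: "submodule R (regular_module R) m"
  shows "m +> \<zero> = m"
  using rcos_zero[OF lideal_addsub[OF L], of \<zero>] L unfolding lideal_iff by simp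

lemma Q_lmod:
  assumes L: "submodule R (regular_module R) m"
  shows "lmod R (Qm R m)"
proof -
  note add = Q_add[OF L] and sm = Q_smult[OF L] and z = Q_zero[OF L]
  have ag: "abelian_group (Qm R m)"
  proof (rule abelian_groupI)
    fix x y assume "x \<in> carrier (Qm R m)" "y \<in> carrier (Qm R m)"
    then obtain a b where ab: "a \<in> carrier R" "b \<in> carrier R" "x = m +> a" "y = m +> b"
      using Q_elem by metis
    have "x \<oplus>\<^bsub>Qm R m\<^esub> y = m +> (a \<oplus> b)" using add ab by simp
    then show "x \<oplus>\<^bsub>Qm R m\<^esub> y \<in> carrier (Qm R m)" using ab by simp
    have "y \<oplus>\<^bsub>Qm R m\<^esub> x = m +> (b \<oplus> a)" using add ab by simp
    then show "x \<oplus>\<^bsub>Qm R m\<^esub> y = y \<oplus>\<^bsub>Qm R m\<^esub> x"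
      using \<open>x \<oplus>\<^bsub>Qm R m\<^esub> y = m +> (a \<oplus> b)\<close> ab by (simp add: a_comm)
  next
    show "\<zero>\<^bsub>Qm R m\<^esub> \<in> carrier (Qm R m)" using z Q_mem[of \<zero> m] by simp
  next
    fix x y w assume "x \<in> carrier (Qm R m)" "y \<in> carrier (Qm R m)" "w \<in> carrier (Qm R m)"
    then obtain a b c where abc: "a \<in> carrier R" "b \<in> carrier R" "c \<in> carrier R"
       "x = m +> a" "y = m +> b" "w = m +> c" using Q_elem by metis
    have "x \<oplus>\<^bsub>Qm R m\<^esub> y \<oplus>\<^bsub>Qm R m\<^esub> w = m +> (a \<oplus> b \<oplus> c)"
      using abc add[of a b] add[of "a \<oplus> b" c] by simp
    moreover have "x \<oplus>\<^bsub>Qm R m\<^esub> (y \<oplus>\<^bsub>Qm R m\<^esub> w) = m +> (a \<oplus> (b \<oplus> c))"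
      using abc add[of b c] add[of a "b \<oplus> c"] by simp
    ultimately show "x \<oplus>\<^bsub>Qm R m\<^esub> y \<oplus>\<^bsub>Qm R m\<^esub> w = x \<oplus>\<^bsub>Qm R m\<^esub> (y \<oplus>\<^bsub>Qm R m\<^esub> w)"
      using abc by (simp add: a_assoc)
  next
    fix x assume "x \<in> carrier (Qm R m)"
    then obtain a where a: "a \<in> carrier R" "x = m +> a" using Q_elem by metis
    have "\<zero>\<^bsub>Qm R m\<^esub> \<oplus>\<^bsub>Qm R m\<^esub> x = (m +> \<zero>) \<oplus>\<^bsub>Qm R m\<^esub> (m +> a)"
      using a z by simp
    also have "\<dots> = m +> a" using add[of \<zero> a] a by simp
    finally show "\<zero>\<^bsub>Qm R m\<^esub> \<oplus>\<^bsub>Qm R m\<^esub> x = x" using a by simp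
    have "m +> (\<ominus> a) \<in> carrier (Qm R m)" using a by simp
    moreover have "(m +> (\<ominus> a)) \<oplus>\<^bsub>Qm R m\<^esub> x = m +> (\<ominus> a \<oplus> a)"
      using add[of "\<ominus> a" a] a by simp
    moreover have "m +> (\<ominus> a \<oplus> a) = \<zero>\<^bsub>Qm R m\<^esub>" using a z by (simp add: l_neg)
    ultimately show "\<exists>y\<in>carrier (Qm R m). y \<oplus>\<^bsub>Qm R m\<^esub> x = \<zero>\<^bsub>Qm R m\<^esub>" by (metis (no_types))
  qed
  show ?thesis unfolding lmod_def lmod_axioms_def
  proof (intro conjI ring_axioms ag ballI allI impI)
    fix r x assume r: "r \<in> carrier R" and "x \<in> carrier (Qm R m)"
    then obtain a where a: "a \<in> carrier R" "x = m +> a" using Q_elem by metis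
    then have "r \<odot>\<^bsub>Qm R m\<^esub> x = m +> (r \<otimes> a)" using sm r by simp
    then show "r \<odot>\<^bsub>Qm R m\<^esub> x \<in> carrier (Qm R m)" using r a by simp
  next
    fix r s x assume "r \<in> carrier R" "s \<in> carrier R" "x \<in> carrier (Qm R m)"
    then obtain a where ra: "r \<in> carrier R" "s \<in> carrier R" "a \<in> carrier R" "x = m +> a"
      using Q_elem by metis
    have "(r \<oplus> s) \<odot>\<^bsub>Qm R m\<^esub> x = m +> ((r \<oplus> s) \<otimes> a)" using sm ra by simp
    moreover have "r \<odot>\<^bsub>Qm R m\<^esub> x \<oplus>\<^bsub>Qm R m\<^esub> s \<odot>\<^bsub>Qm R m\<^esub> x = m +> (r \<otimes> a \<oplus> s \<otimes> a)"
      using sm[of r a] sm[of s a] add[of "r \<otimes> a" "s \<otimes> a"] ra by simp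
    ultimately show "(r \<oplus> s) \<odot>\<^bsub>Qm R m\<^esub> x = r \<odot>\<^bsub>Qm R m\<^esub> x \<oplus>\<^bsub>Qm R m\<^esub> s \<odot>\<^bsub>Qm R m\<^esub> x"
      using ra by (simp add: l_distr)
  next
    fix r x y assume "r \<in> carrier R" "x \<in> carrier (Qm R m)" "y \<in> carrier (Qm R m)"
    then obtain a b where rab: "r \<in> carrier R" "a \<in> carrier R" "b \<in> carrier R" "x = m +> a" "y = m +> b"
      using Q_elem by metis
    have "r \<odot>\<^bsub>Qm R m\<^esub> (x \<oplus>\<^bsub>Qm R m\<^esub> y) = m +> (r \<otimes> (a \<oplus> b))"
      using add[of a b] sm[of r "a \<oplus> b"] rab by simp
    moreover have "r \<odot>\<^bsub>Qm R m\<^esub> x \<oplus>\<^bsub>Qm R m\<^esub> r \<odot>\<^bsub>Qm R m\<^esub> y = m +> (r \<otimes> a \<oplus> r \<otimes> b)"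
      using sm[of r a] sm[of r b] add[of "r \<otimes> a" "r \<otimes> b"] rab by simp
    ultimately show "r \<odot>\<^bsub>Qm R m\<^esub> (x \<oplus>\<^bsub>Qm R m\<^esub> y) = r \<odot>\<^bsub>Qm R m\<^esub> x \<oplus>\<^bsub>Qm R m\<^esub> r \<odot>\<^bsub>Qm R m\<^esub> y"
      using rab by (simp add: r_distr)
  next
    fix r s x assume "r \<in> carrier R" "s \<in> carrier R" "x \<in> carrier (Qm R m)"
    then obtain a where ra: "r \<in> carrier R" "s \<in> carrier R" "a \<in> carrier R" "x = m +> a"
      using Q_elem by metis
    have "(r \<otimes> s) \<odot>\<^bsub>Qm R m\<^esub> x = m +> ((r \<otimes> s) \<otimes> a)" using sm ra by simp
    moreover have "r \<odot>\<^bsub>Qm R m\<^esub> (s \<odot>\<^bsub>Qm R m\<^esub> x) = m +> (r \<otimes> (s \<otimes> a))"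
      using sm[of s a] sm[of r "s \<otimes> a"] ra by simp
    ultimately show "(r \<otimes> s) \<odot>\<^bsub>Qm R m\<^esub> x = r \<odot>\<^bsub>Qm R m\<^esub> (s \<odot>\<^bsub>Qm R m\<^esub> x)"
      using ra by (simp add: m_assoc)
  next
    fix x assume "x \<in> carrier (Qm R m)"
    then obtain a where "a \<in> carrier R" "x = m +> a" using Q_elem by metis
    then show "\<one> \<odot>\<^bsub>Qm R m\<^esub> x = x" using sm[of \<one> a] by simp
  qed
qed

end

definition ann :: "('a,'m) ring_scheme \<Rightarrow> ('a, 'b, 'n) module_scheme \<Rightarrow> 'b \<Rightarrow> 'a set" where
  "ann R M x = {a \<in> carrier R. a \<odot>\<^bsub>M\<^esub> x = \<zero>\<^bsub>M\<^esub>}"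

context ring begin

definition proj :: "'a set \<Rightarrow> 'a \<Rightarrow> 'a set" where "proj m a = m +> a"

lemma proj_hom:
  assumes L: "submodule R (regular_module R) m"
  shows "proj m \<in> mod_hom R (regular_module R) (Qm R m)"
  unfolding mod_hom_def proj_def using Q_add[OF L] Q_smult[OF L] by auto

lemma max_lid: "maximal_left_ideal R m \<Longrightarrow> submodule R (regular_module R) m"
  unfolding maximal_left_ideal_def by blast

lemma Q_simple:
  assumes mx: "maximal_left_ideal R m"
  shows "simple_module R (Qm R m)"
proof -
  have L: "submodule R (regular_module R) m" using mx by (rule max_lid)
  have I: "additive_subgroup m R" by (rule lideal_addsub[OF L])
  have mc: "m \<subseteq> carrier R" using L unfolding lideal_iff by blast
  have ne: "m \<noteq> carrier R" and mx2: "\<And>K. submodule R (regular_module R) K \<Longrightarrow> m \<subseteq> K \<Longrightarrow> K = m \<or> K = carrier R"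
    using mx unfolding maximal_left_ideal_def by blast+
  interpret Q: lmod R "Qm R m" by (rule Q_lmod[OF L])
  have lm: "left_module R (Qm R m)" using Q_lmod[OF L] lmod_iff by blast
  obtain a where a: "a \<in> carrier R" "a \<notin> m" using ne mc by blast
  have "m +> a \<noteq> m" using rcos_zero[OF I a(1)] a(2) by simp
  moreover have "m +> a \<in> carrier (Qm R m)" using a by simp
  ultimately have nt: "carrier (Qm R m) \<noteq> {\<zero>\<^bsub>Qm R m\<^esub>}" by auto
  have sm: "N = {\<zero>\<^bsub>Qm R m\<^esub>} \<or> N = carrier (Qm R m)" if N: "submodule R (Qm R m) N" for N
  proof -
    let ?K = "{x \<in> carrier (regular_module R). proj m x \<in> N}"
    have K: "submodule R (regular_module R) ?K"
      by (rule hom_preimage[OF regular_lmod Q_lmod[OF L] proj_hom[OF L] N])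
    have N0: "m \<in> N" and Nc: "N \<subseteq> carrier (Qm R m)" using N unfolding Q.submodule_iff by auto
    have "m \<subseteq> ?K"
    proof
      fix h assume h: "h \<in> m"
      then have hc: "h \<in> carrier R" using mc by blast
      have "proj m h = m" using rcos_zero[OF I hc] h by (simp add: proj_def)
      then show "h \<in> ?K" using N0 hc by simp
    qed
    then have "?K = m \<or> ?K = carrier R" using mx2[OF K] by simp
    then show ?thesis
    proof
      assume Km: "?K = m"
      have "N \<subseteq> {m}"
      proof
        fix X assume X: "X \<in> N"
        then obtain b where b: "b \<in> carrier R" "X = m +> b" using Nc Q_elem by blast
        then have "b \<in> ?K" using X by (simp add: proj_def)
        then have "b \<in> m" using Km by blast
        then show "X \<in> {m}" using b rcos_zero[OF I] by simp
      qed
      then show ?thesis using N0 by auto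
    next
      assume Kc: "?K = carrier R"
      have "carrier (Qm R m) \<subseteq> N"
      proof
        fix X assume "X \<in> carrier (Qm R m)"
        then obtain b where b: "b \<in> carrier R" "X = m +> b" using Q_elem by blast
        then have "b \<in> ?K" using Kc by simp
        then show "X \<in> N" using b by (simp add: proj_def)
      qed
      then show ?thesis using Nc by auto
    qed
  qed
  show ?thesis unfolding simple_module_def using lm nt sm by blast
qed

lemma cyclic_sub:
  assumes M: "lmod R M" and x: "x \<in> carrier M" and that: "submodule R (regular_module R) K"
  shows "submodule R M {a \<odot>\<^bsub>M\<^esub> x | a. a \<in> K}"
proof -
  interpret M: lmod R M by fact
  have K: "K \<subseteq> carrier R" "\<zero> \<in> K" "\<And>a b. a \<in> K \<Longrightarrow> b \<in> K \<Longrightarrow> a \<oplus> b \<in> K"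
    "\<And>r a. r \<in> carrier R \<Longrightarrow> a \<in> K \<Longrightarrow> r \<otimes> a \<in> K"
    using that unfolding lideal_iff by auto
  show ?thesis unfolding M.submodule_iff
  proof (intro conjI ballI)
    show "{a \<odot>\<^bsub>M\<^esub> x |a. a \<in> K} \<subseteq> carrier M" using K(1) x M.sm_closed by auto
    show "\<zero>\<^bsub>M\<^esub> \<in> {a \<odot>\<^bsub>M\<^esub> x |a. a \<in> K}" using K(2) M.sm_zero_l[OF x] by force
  next
    fix y z assume "y \<in> {a \<odot>\<^bsub>M\<^esub> x |a. a \<in> K}" "z \<in> {a \<odot>\<^bsub>M\<^esub> x |a. a \<in> K}"
    then obtain a b where ab: "a \<in> K" "b \<in> K" "y = a \<odot>\<^bsub>M\<^esub> x" "z = b \<odot>\<^bsub>M\<^esub> x" by blast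
    have "a \<in> carrier R" "b \<in> carrier R" using ab K(1) by auto
    then have "y \<oplus>\<^bsub>M\<^esub> z = (a \<oplus> b) \<odot>\<^bsub>M\<^esub> x" using M.sm_ldistr[of a b x] ab x by simp
    then show "y \<oplus>\<^bsub>M\<^esub> z \<in> {a \<odot>\<^bsub>M\<^esub> x |a. a \<in> K}" using K(3) ab by blast
  next
    fix r y assume r: "r \<in> carrier R" and "y \<in> {a \<odot>\<^bsub>M\<^esub> x |a. a \<in> K}"
    then obtain a where a: "a \<in> K" "y = a \<odot>\<^bsub>M\<^esub> x" by blast
    have "a \<in> carrier R" using a K(1) by auto
    then have "r \<odot>\<^bsub>M\<^esub> y = (r \<otimes> a) \<odot>\<^bsub>M\<^esub> x" using M.sm_assoc[of r a x] a x r by simp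
    then show "r \<odot>\<^bsub>M\<^esub> y \<in> {a \<odot>\<^bsub>M\<^esub> x |a. a \<in> K}" using K(4) a r by blast
  qed
qed

lemma carrier_lid: "submodule R (regular_module R) (carrier R)"
  unfolding lideal_iff by auto

lemma simple_cyclic:
  assumes S: "simple_module R M" and x: "x \<in> carrier M" "x \<noteq> \<zero>\<^bsub>M\<^esub>"
    and K: "submodule R (regular_module R) K" and k: "k \<in> K" "k \<odot>\<^bsub>M\<^esub> x \<noteq> \<zero>\<^bsub>M\<^esub>"
  shows "carrier M = {a \<odot>\<^bsub>M\<^esub> x | a. a \<in> K}"
proof -
  have M: "lmod R M" using S unfolding simple_module_def lmod_iff by blast
  have "submodule R M {a \<odot>\<^bsub>M\<^esub> x | a. a \<in> K}" by (rule cyclic_sub[OF M x(1) K])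
  moreover have "k \<odot>\<^bsub>M\<^esub> x \<in> {a \<odot>\<^bsub>M\<^esub> x | a. a \<in> K}" using k by blast
  ultimately show ?thesis using S k(2) unfolding simple_module_def by blast
qed


lemma ann_max:
  assumes S: "simple_module R M" and x: "x \<in> carrier M" "x \<noteq> \<zero>\<^bsub>M\<^esub>"
  shows "maximal_left_ideal R (ann R M x)"
proof -
  have M: "lmod R M" using S unfolding simple_module_def lmod_iff by blast
  interpret M: lmod R M by fact
  have L: "submodule R (regular_module R) (ann R M x)" unfolding ann_def lideal_iff
    using x M.sm_zero_l M.sm_ldistr M.sm_assoc M.sm_zero_r by auto
  have ne: "ann R M x \<noteq> carrier R"
  proof
    assume "ann R M x = carrier R"
    then have "\<one> \<in> ann R M x" by simp
    then have "\<one> \<odot>\<^bsub>M\<^esub> x = \<zero>\<^bsub>M\<^esub>" unfolding ann_def by simp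
    then show False using M.sm_one[OF x(1)] x(2) by simp
  qed
  have mx: "K = ann R M x \<or> K = carrier R"
    if K: "submodule R (regular_module R) K" and sub: "ann R M x \<subseteq> K" for K
  proof (cases "K \<subseteq> ann R M x")
    case True then show ?thesis using sub by blast
  next
    case False
    then obtain k where k: "k \<in> K" "k \<notin> ann R M x" by blast
    have Kc: "K \<subseteq> carrier R" using K unfolding lideal_iff by blast
    have kx: "k \<odot>\<^bsub>M\<^esub> x \<noteq> \<zero>\<^bsub>M\<^esub>" using k Kc unfolding ann_def by auto
    have cy: "carrier M = {a \<odot>\<^bsub>M\<^esub> x | a. a \<in> K}" by (rule simple_cyclic[OF S x K k(1) kx])
    have "carrier R \<subseteq> K"
    proof
      fix a assume a: "a \<in> carrier R"
      then have "a \<odot>\<^bsub>M\<^esub> x \<in> carrier M" using x M.sm_closed by simp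
      then obtain k' where k': "k' \<in> K" "a \<odot>\<^bsub>M\<^esub> x = k' \<odot>\<^bsub>M\<^esub> x" using cy by blast
      have k'c: "k' \<in> carrier R" using k' Kc by blast
      have "(a \<ominus> k') \<odot>\<^bsub>M\<^esub> x = \<zero>\<^bsub>M\<^esub>" using M.sm_minus[OF a k'c x(1)] k'(2) M.sm_closed k'c x(1)
        by (simp add: M.M.r_neg M.M.minus_eq)
      then have "a \<ominus> k' \<in> K" using sub a k'c unfolding ann_def by auto
      moreover have "a = (a \<ominus> k') \<oplus> k'" using a k'c by (simp add: a_minus_def a_assoc l_neg)
      ultimately show "a \<in> K" using K k'(1) unfolding lideal_iff by metis
    qed
    then show ?thesis using Kc by blast
  qed
  show ?thesis unfolding maximal_left_ideal_def using L ne mx by blast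
qed

abbreviation "JR \<equiv> jacobson_radical R"

lemma J_sub_max: "maximal_left_ideal R m \<Longrightarrow> JR \<subseteq> m"
  unfolding jacobson_radical_def by blast

lemma J_carrier: "JR \<subseteq> carrier R"
  unfolding jacobson_radical_def by blast

lemma J_lid: "submodule R (regular_module R) JR"
proof -
  have "\<And>m. maximal_left_ideal R m \<Longrightarrow> \<zero> \<in> m \<and> (\<forall>x\<in>m. \<forall>y\<in>m. x \<oplus> y \<in> m) \<and> (\<forall>a\<in>carrier R. \<forall>x\<in>m. a \<otimes> x \<in> m)"
    using max_lid unfolding lideal_iff by blast
  then show ?thesis unfolding lideal_iff jacobson_radical_def by auto
qed

lemma J_ann:
  assumes S: "simple_module R M" and x: "x \<in> carrier M" and j: "j \<in> JR"
  shows "j \<odot>\<^bsub>M\<^esub> x = \<zero>\<^bsub>M\<^esub>"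
proof (cases "x = \<zero>\<^bsub>M\<^esub>")
  case True
  have M: "lmod R M" using S unfolding simple_module_def lmod_iff by blast
  then show ?thesis using True lmod.sm_zero_r[OF M] j J_carrier by blast
next
  case False
  have "JR \<subseteq> ann R M x" using J_sub_max[OF ann_max[OF S x False]] .
  then show ?thesis using j unfolding ann_def by blast
qed

lemma J_ideal: "ideal JR R"
proof -
  have L: "submodule R (regular_module R) JR" by (rule J_lid)
  have rc: "j \<otimes> r \<in> JR" if j: "j \<in> JR" and r: "r \<in> carrier R" for j r
  proof -
    have jc: "j \<in> carrier R" using j J_carrier by blast
    have "j \<otimes> r \<in> m" if mx: "maximal_left_ideal R m" for m
    proof (cases "r \<in> m")
      case True
      then show ?thesis using max_lid[OF mx] jc unfolding lideal_iff by blast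
    next
      case False
      have Lm: "submodule R (regular_module R) m" by (rule max_lid[OF mx])
      have I: "additive_subgroup m R" by (rule lideal_addsub[OF Lm])
      have S: "simple_module R (Qm R m)" by (rule Q_simple[OF mx])
      have X: "m +> r \<in> carrier (Qm R m)" using r by simp
      have X0: "m +> r \<noteq> \<zero>\<^bsub>Qm R m\<^esub>" using rcos_zero[OF I r] False by simp
      have "j \<odot>\<^bsub>Qm R m\<^esub> (m +> r) = \<zero>\<^bsub>Qm R m\<^esub>" by (rule J_ann[OF S X j])
      then have "m +> (j \<otimes> r) = m" using Q_smult[OF Lm jc r] by simp
      then show ?thesis using rcos_zero[OF I] jc r by simp
    qed
    then show ?thesis unfolding jacobson_radical_def using jc r by blast
  qed
  show ?thesis
  proof (rule idealI)
    show "ring R" by (rule ring_axioms)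
    show "subgroup JR (add_monoid R)" using lideal_addsub[OF L] unfolding additive_subgroup_def .
    show "\<And>a x. a \<in> JR \<Longrightarrow> x \<in> carrier R \<Longrightarrow> x \<otimes> a \<in> JR" using L unfolding lideal_iff by blast
    show "\<And>a x. a \<in> JR \<Longrightarrow> x \<in> carrier R \<Longrightarrow> a \<otimes> x \<in> JR" using rc by blast
  qed
qed

end

lemma finite_image_factor:
  assumes "finite (f ` S)" and "\<And>x y. x \<in> S \<Longrightarrow> y \<in> S \<Longrightarrow> f x = f y \<Longrightarrow> g x = g y"
  shows "finite (g ` S)"
proof -
  have "g ` S \<subseteq> (\<lambda>z. g (SOME x. x \<in> S \<and> f x = z)) ` (f ` S)"
  proof
    fix w assume "w \<in> g ` S"
    then obtain x where x: "x \<in> S" "w = g x" by blast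
    have "\<exists>x'. x' \<in> S \<and> f x' = f x" using x by blast
    then have "(SOME x'. x' \<in> S \<and> f x' = f x) \<in> S \<and> f (SOME x'. x' \<in> S \<and> f x' = f x) = f x"
      by (rule someI_ex)
    then have "g (SOME x'. x' \<in> S \<and> f x' = f x) = g x" using assms(2) x by blast
    then have "w = (\<lambda>z. g (SOME x. x \<in> S \<and> f x = z)) (f x)" using x by simp
    moreover have "f x \<in> f ` S" using x by blast
    ultimately show "w \<in> (\<lambda>z. g (SOME x. x \<in> S \<and> f x = z)) ` (f ` S)" by blast
  qed
  then show ?thesis using assms(1) finite_subset by blast
qed

context lmod begin

lemma M_eq_of_minus:
  assumes u: "u \<in> carrier M" and v: "v \<in> carrier M" and e: "u \<ominus>\<^bsub>M\<^esub> v = \<zero>\<^bsub>M\<^esub>"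
  shows "u = v"
proof -
  have "u \<oplus>\<^bsub>M\<^esub> (\<ominus>\<^bsub>M\<^esub> v) = \<zero>\<^bsub>M\<^esub>" using e by (simp add: a_minus_def)
  then have "\<ominus>\<^bsub>M\<^esub> (\<ominus>\<^bsub>M\<^esub> v) = u" using M.minus_equality u v by simp
  then show ?thesis using v M.minus_minus by simp
qed

lemma sm_eq_iff:
  assumes a: "a \<in> carrier R" and b: "b \<in> carrier R" and x: "x \<in> carrier M"
  shows "a \<odot>\<^bsub>M\<^esub> x = b \<odot>\<^bsub>M\<^esub> x \<longleftrightarrow> (a \<ominus> b) \<odot>\<^bsub>M\<^esub> x = \<zero>\<^bsub>M\<^esub>"
  using sm_minus[OF a b x] M_eq_of_minus[of "a \<odot>\<^bsub>M\<^esub> x" "b \<odot>\<^bsub>M\<^esub> x"] sm_closed a b x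
  by (auto simp: M.r_neg M.minus_eq)

end

context ring begin

lemma quot_carrier: "carrier (R Quot I) = (\<lambda>a. I +> a) ` carrier R"
  unfolding FactRing_def A_RCOSETS_def' by auto

lemma simple_elem:
  assumes S: "simple_module R M"
  obtains x where "x \<in> carrier M" "x \<noteq> \<zero>\<^bsub>M\<^esub>"
proof -
  have M: "lmod R M" using S unfolding simple_module_def lmod_iff by blast
  interpret M: lmod R M by fact
  have "\<zero>\<^bsub>M\<^esub> \<in> carrier M" by simp
  moreover have "carrier M \<noteq> {\<zero>\<^bsub>M\<^esub>}" using S unfolding simple_module_def by blast
  ultimately show ?thesis using that by blast
qed

lemma simple_gen:
  assumes S: "simple_module R M" and x: "x \<in> carrier M" "x \<noteq> \<zero>\<^bsub>M\<^esub>"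
  shows "carrier M = (\<lambda>a. a \<odot>\<^bsub>M\<^esub> x) ` carrier R"
proof -
  have M: "lmod R M" using S unfolding simple_module_def lmod_iff by blast
  have "\<one> \<odot>\<^bsub>M\<^esub> x \<noteq> \<zero>\<^bsub>M\<^esub>" using lmod.sm_one[OF M x(1)] x(2) by simp
  then have "carrier M = {a \<odot>\<^bsub>M\<^esub> x | a. a \<in> carrier R}"
    using simple_cyclic[OF S x carrier_lid one_closed] by simp
  then show ?thesis by blast
qed

lemma J_coset_same:
  assumes S: "simple_module R M" and x: "x \<in> carrier M"
    and a: "a \<in> carrier R" and b: "b \<in> carrier R" and e: "JR +> a = JR +> b"
  shows "a \<odot>\<^bsub>M\<^esub> x = b \<odot>\<^bsub>M\<^esub> x"
proof -
  have M: "lmod R M" using S unfolding simple_module_def lmod_iff by blast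
  have "a \<ominus> b \<in> JR" using e rcos_eq[OF lideal_addsub[OF J_lid] a b] by simp
  then have "(a \<ominus> b) \<odot>\<^bsub>M\<^esub> x = \<zero>\<^bsub>M\<^esub>" using J_ann[OF S x] by blast
  then show ?thesis using lmod.sm_eq_iff[OF M a b x] by simp
qed

lemma simple_finite:
  assumes S: "simple_module R M" and fin: "finite (carrier (R Quot JR))"
  shows "finite (carrier M)"
proof -
  obtain x where x: "x \<in> carrier M" "x \<noteq> \<zero>\<^bsub>M\<^esub>" using simple_elem[OF S] by blast
  have f1: "finite ((\<lambda>a. JR +> a) ` carrier R)" using fin quot_carrier by simp
  have "finite ((\<lambda>a. a \<odot>\<^bsub>M\<^esub> x) ` carrier R)"
    by (rule finite_image_factor[OF f1]) (rule J_coset_same[OF S x(1)], assumption+)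
  then show ?thesis using simple_gen[OF S x] by simp
qed

lemma max_union:
  assumes mx: "maximal_left_ideal R m"
  shows "m = \<Union>{c \<in> carrier (R Quot JR). c \<subseteq> m}"
proof
  have L: "submodule R (regular_module R) m" by (rule max_lid[OF mx])
  have mc: "m \<subseteq> carrier R" using L unfolding lideal_iff by blast
  show "m \<subseteq> \<Union>{c \<in> carrier (R Quot JR). c \<subseteq> m}"
  proof
    fix y assume y: "y \<in> m"
    have yc: "y \<in> carrier R" using y mc by blast
    have "JR +> y \<subseteq> m"
    proof
      fix z assume "z \<in> JR +> y"
      then have z: "z \<in> carrier R" "z \<ominus> y \<in> JR" using rcos_mem[OF lideal_addsub[OF J_lid] yc] by auto
      then have "z \<ominus> y \<in> m" using J_sub_max[OF mx] by blast
      moreover have "z = (z \<ominus> y) \<oplus> y" using z yc by (simp add: a_minus_def a_assoc l_neg)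
      moreover have "\<forall>x\<in>m. \<forall>y\<in>m. x \<oplus> y \<in> m" using L unfolding lideal_iff by blast
      ultimately show "z \<in> m" using y by (metis (no_types))
    qed
    moreover have "y \<in> JR +> y" by (rule rcos_self[OF lideal_addsub[OF J_lid] yc])
    moreover have "JR +> y \<in> carrier (R Quot JR)" using yc quot_carrier by auto
    ultimately show "y \<in> \<Union>{c \<in> carrier (R Quot JR). c \<subseteq> m}" by blast
  qed
qed blast

lemma finite_max:
  assumes fin: "finite (carrier (R Quot JR))"
  shows "finite {m. maximal_left_ideal R m}"
proof -
  let ?phi = "\<lambda>m. {c \<in> carrier (R Quot JR). c \<subseteq> m}"
  have "inj_on ?phi {m. maximal_left_ideal R m}"
  proof (rule inj_onI)
    fix m1 m2 assume "m1 \<in> {m. maximal_left_ideal R m}" "m2 \<in> {m. maximal_left_ideal R m}"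
      "?phi m1 = ?phi m2"
    then show "m1 = m2" using max_union[of m1] max_union[of m2] by simp
  qed
  moreover have "?phi ` {m. maximal_left_ideal R m} \<subseteq> Pow (carrier (R Quot JR))" by blast
  then have "finite (?phi ` {m. maximal_left_ideal R m})" using fin finite_subset by blast
  ultimately show ?thesis using finite_imageD by blast
qed

lemma free_simps[simp]:
  "carrier (free_module R n) = {v. (\<forall>i<n. v i \<in> carrier R) \<and> (\<forall>i\<ge>n. v i = \<zero>)}"
  "zero (free_module R n) = (\<lambda>i. \<zero>)"
  "add (free_module R n) = (\<lambda>v w i. v i \<oplus> w i)"
  "smult (free_module R n) = (\<lambda>a v i. a \<otimes> v i)"
  by (simp_all add: free_module_def)

lemma free_lmod: "lmod R (free_module R n)"
proof -
  have ag: "abelian_group (free_module R n)"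
  proof (rule abelian_groupI)
    fix x y assume "x \<in> carrier (free_module R n)" "y \<in> carrier (free_module R n)"
    then show "x \<oplus>\<^bsub>free_module R n\<^esub> y \<in> carrier (free_module R n)"
      "x \<oplus>\<^bsub>free_module R n\<^esub> y = y \<oplus>\<^bsub>free_module R n\<^esub> x"
      by (auto simp: a_comm intro!: ext) (metis a_comm leI)
  next
    show "\<zero>\<^bsub>free_module R n\<^esub> \<in> carrier (free_module R n)" by simp
  next
    fix x y z assume H: "x \<in> carrier (free_module R n)" "y \<in> carrier (free_module R n)" "z \<in> carrier (free_module R n)"
    show "x \<oplus>\<^bsub>free_module R n\<^esub> y \<oplus>\<^bsub>free_module R n\<^esub> z = x \<oplus>\<^bsub>free_module R n\<^esub> (y \<oplus>\<^bsub>free_module R n\<^esub> z)"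
    proof (simp, rule ext)
      fix i show "x i \<oplus> y i \<oplus> z i = x i \<oplus> (y i \<oplus> z i)"
        using H by (cases "i < n") (auto simp: a_assoc)
    qed
  next
    fix x assume H: "x \<in> carrier (free_module R n)"
    show "\<zero>\<^bsub>free_module R n\<^esub> \<oplus>\<^bsub>free_module R n\<^esub> x = x"
    proof (simp, rule ext)
      fix i show "\<zero> \<oplus> x i = x i" using H by (cases "i < n") auto
    qed
    have "(\<lambda>i. \<ominus> x i) \<in> carrier (free_module R n)" using H by auto
    moreover have "(\<lambda>i. \<ominus> x i) \<oplus>\<^bsub>free_module R n\<^esub> x = \<zero>\<^bsub>free_module R n\<^esub>"
    proof (simp, rule ext)
      fix i show "\<ominus> x i \<oplus> x i = \<zero>" using H by (cases "i < n") (auto simp: l_neg)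
    qed
    ultimately show "\<exists>y\<in>carrier (free_module R n). y \<oplus>\<^bsub>free_module R n\<^esub> x = \<zero>\<^bsub>free_module R n\<^esub>"
      by blast
  qed
  show ?thesis unfolding lmod_def lmod_axioms_def
  proof (intro conjI ring_axioms ag ballI allI impI)
    fix a x assume "a \<in> carrier R" "x \<in> carrier (free_module R n)"
    then show "a \<odot>\<^bsub>free_module R n\<^esub> x \<in> carrier (free_module R n)" by auto
  next
    fix a b x assume H: "a \<in> carrier R" "b \<in> carrier R" "x \<in> carrier (free_module R n)"
    show "(a \<oplus> b) \<odot>\<^bsub>free_module R n\<^esub> x = a \<odot>\<^bsub>free_module R n\<^esub> x \<oplus>\<^bsub>free_module R n\<^esub> b \<odot>\<^bsub>free_module R n\<^esub> x"
    proof (simp, rule ext)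
      fix i show "(a \<oplus> b) \<otimes> x i = a \<otimes> x i \<oplus> b \<otimes> x i" using H by (cases "i < n") (auto simp: l_distr)
    qed
  next
    fix a x y assume H: "a \<in> carrier R" "x \<in> carrier (free_module R n)" "y \<in> carrier (free_module R n)"
    show "a \<odot>\<^bsub>free_module R n\<^esub> (x \<oplus>\<^bsub>free_module R n\<^esub> y) = a \<odot>\<^bsub>free_module R n\<^esub> x \<oplus>\<^bsub>free_module R n\<^esub> a \<odot>\<^bsub>free_module R n\<^esub> y"
    proof (simp, rule ext)
      fix i show "a \<otimes> (x i \<oplus> y i) = a \<otimes> x i \<oplus> a \<otimes> y i" using H by (cases "i < n") (auto simp: r_distr)
    qed
  next
    fix a b x assume H: "a \<in> carrier R" "b \<in> carrier R" "x \<in> carrier (free_module R n)"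
    show "(a \<otimes> b) \<odot>\<^bsub>free_module R n\<^esub> x = a \<odot>\<^bsub>free_module R n\<^esub> (b \<odot>\<^bsub>free_module R n\<^esub> x)"
    proof (simp, rule ext)
      fix i show "a \<otimes> b \<otimes> x i = a \<otimes> (b \<otimes> x i)" using H by (cases "i < n") (auto simp: m_assoc)
    qed
  next
    fix x assume H: "x \<in> carrier (free_module R n)"
    show "\<one> \<odot>\<^bsub>free_module R n\<^esub> x = x"
    proof (simp, rule ext)
      fix i show "\<one> \<otimes> x i = x i" using H by (cases "i < n") auto
    qed
  qed
qed

lemma ann_fib:
  assumes S: "simple_module R M" and x: "x \<in> carrier M" "x \<noteq> \<zero>\<^bsub>M\<^esub>" and a: "a \<in> carrier R"
  shows "{b \<in> carrier R. b \<odot>\<^bsub>M\<^esub> x = a \<odot>\<^bsub>M\<^esub> x} = ann R M x +> a"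
proof -
  have M: "lmod R M" using S unfolding simple_module_def lmod_iff by blast
  have I: "additive_subgroup (ann R M x) R" by (rule lideal_addsub[OF max_lid[OF ann_max[OF S x]]])
  show ?thesis
  proof (rule subset_antisym; rule subsetI)
    fix b assume "b \<in> {b \<in> carrier R. b \<odot>\<^bsub>M\<^esub> x = a \<odot>\<^bsub>M\<^esub> x}"
    then have b: "b \<in> carrier R" "b \<odot>\<^bsub>M\<^esub> x = a \<odot>\<^bsub>M\<^esub> x" by auto
    then have "(b \<ominus> a) \<odot>\<^bsub>M\<^esub> x = \<zero>\<^bsub>M\<^esub>" using lmod.sm_eq_iff[OF M b(1) a x(1)] by simp
    then have "b \<ominus> a \<in> ann R M x" unfolding ann_def using b a by simp
    then show "b \<in> ann R M x +> a" using rcos_mem[OF I a] b by simp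
  next
    fix b assume "b \<in> ann R M x +> a"
    then have b: "b \<in> carrier R" "b \<ominus> a \<in> ann R M x" using rcos_mem[OF I a] by auto
    then have "(b \<ominus> a) \<odot>\<^bsub>M\<^esub> x = \<zero>\<^bsub>M\<^esub>" unfolding ann_def by simp
    then have "b \<odot>\<^bsub>M\<^esub> x = a \<odot>\<^bsub>M\<^esub> x" using lmod.sm_eq_iff[OF M b(1) a x(1)] by simp
    then show "b \<in> {b \<in> carrier R. b \<odot>\<^bsub>M\<^esub> x = a \<odot>\<^bsub>M\<^esub> x}" using b by simp
  qed
qed

lemma simple_iso:
  assumes S: "simple_module R M" and x: "x \<in> carrier M" "x \<noteq> \<zero>\<^bsub>M\<^esub>"
  shows "mod_iso R M (Qm R (ann R M x))"
proof -
  let ?m = "ann R M x"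
  define f where "f y = {b \<in> carrier R. b \<odot>\<^bsub>M\<^esub> x = y}" for y
  have M: "lmod R M" using S unfolding simple_module_def lmod_iff by blast
  interpret M: lmod R M by fact
  have L: "submodule R (regular_module R) ?m" by (rule max_lid[OF ann_max[OF S x]])
  have I: "additive_subgroup ?m R" by (rule lideal_addsub[OF L])
  have gen: "carrier M = (\<lambda>a. a \<odot>\<^bsub>M\<^esub> x) ` carrier R" by (rule simple_gen[OF S x])
  have fa: "f (a \<odot>\<^bsub>M\<^esub> x) = ?m +> a" if "a \<in> carrier R" for a
    unfolding f_def using ann_fib[OF S x that] .
  have hom: "f \<in> mod_hom R M (Qm R ?m)"
    unfolding mod_hom_def
  proof (intro CollectI conjI ballI funcsetI)
    fix y assume "y \<in> carrier M"
    then obtain a where a: "a \<in> carrier R" "y = a \<odot>\<^bsub>M\<^esub> x" using gen by blast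
    then show "f y \<in> carrier (Qm R ?m)" using fa by simp
  next
    fix y z assume "y \<in> carrier M" "z \<in> carrier M"
    then obtain a b where ab: "a \<in> carrier R" "y = a \<odot>\<^bsub>M\<^esub> x" "b \<in> carrier R" "z = b \<odot>\<^bsub>M\<^esub> x"
      using gen by blast
    have "y \<oplus>\<^bsub>M\<^esub> z = (a \<oplus> b) \<odot>\<^bsub>M\<^esub> x" using ab M.sm_ldistr x by simp
    then have "f (y \<oplus>\<^bsub>M\<^esub> z) = ?m +> (a \<oplus> b)" using fa ab by simp
    also have "\<dots> = (?m +> a) \<oplus>\<^bsub>Qm R ?m\<^esub> (?m +> b)" using Q_add[OF L] ab by simp
    finally show "f (y \<oplus>\<^bsub>M\<^esub> z) = f y \<oplus>\<^bsub>Qm R ?m\<^esub> f z" using fa ab by simp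
  next
    fix r y assume r: "r \<in> carrier R" and "y \<in> carrier M"
    then obtain a where a: "a \<in> carrier R" "y = a \<odot>\<^bsub>M\<^esub> x" using gen by blast
    have "r \<odot>\<^bsub>M\<^esub> y = (r \<otimes> a) \<odot>\<^bsub>M\<^esub> x" using a r M.sm_assoc x by simp
    then have "f (r \<odot>\<^bsub>M\<^esub> y) = ?m +> (r \<otimes> a)" using fa a r by simp
    also have "\<dots> = r \<odot>\<^bsub>Qm R ?m\<^esub> (?m +> a)" using Q_smult[OF L r a(1)] by simp
    finally show "f (r \<odot>\<^bsub>M\<^esub> y) = r \<odot>\<^bsub>Qm R ?m\<^esub> f y" using fa a by simp
  qed
  have inj: "inj_on f (carrier M)"
  proof (rule inj_onI)
    fix y z assume "y \<in> carrier M" "z \<in> carrier M" and e: "f y = f z"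
    then obtain a where a: "a \<in> carrier R" "y = a \<odot>\<^bsub>M\<^esub> x" using gen by blast
    have "a \<in> f y" unfolding f_def using a by simp
    then have "a \<in> f z" using e by simp
    then show "y = z" unfolding f_def using a by simp
  qed
  have im: "f ` carrier M = carrier (Qm R ?m)"
  proof
    show "f ` carrier M \<subseteq> carrier (Qm R ?m)" using hom unfolding mod_hom_def by auto
  next
    show "carrier (Qm R ?m) \<subseteq> f ` carrier M"
    proof
      fix X assume "X \<in> carrier (Qm R ?m)"
      then obtain a where a: "a \<in> carrier R" "X = ?m +> a" using Q_elem by blast
      then have "X = f (a \<odot>\<^bsub>M\<^esub> x)" using fa by simp
      moreover have "a \<odot>\<^bsub>M\<^esub> x \<in> carrier M" using a x M.sm_closed by simp
      ultimately show "X \<in> f ` carrier M" by blast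
    qed
  qed
  show ?thesis unfolding mod_iso_def bij_betw_def using hom inj im by blast
qed

end

lemma chain_stab:
  assumes C: "finite C" and sub: "\<And>n. f n \<subseteq> C" and dec: "\<And>n. f (Suc n) \<subseteq> f n"
  shows "\<exists>N. \<forall>n\<ge>N. f n = f N"
proof -
  let ?c = "\<lambda>n. card (f n)"
  have fin: "\<And>n. finite (f n)" using C sub finite_subset by blast
  have "range ?c \<subseteq> {0..card C}" using card_mono[OF C sub] by auto
  then have fr: "finite (range ?c)" using finite_subset by blast
  have "Min (range ?c) \<in> range ?c" using fr by (intro Min_in) auto
  then obtain N where N: "?c N = Min (range ?c)" by auto
  have "f n = f N" if "n \<ge> N" for n
  proof -
    have s: "f n \<subseteq> f N" using lift_Suc_antimono_le[of f, OF dec that] by simp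
    have "?c N \<le> ?c n" using N fr by simp
    moreover have "?c n \<le> ?c N" using card_mono[OF fin s] .
    ultimately show ?thesis using card_subset_eq[OF fin s] by simp
  qed
  then show ?thesis by blast
qed

context ring begin

lemma simple_fp:
  assumes S: "simple_module R M" and x: "x \<in> carrier M" "x \<noteq> \<zero>\<^bsub>M\<^esub>"
    and fg: "fin_gen_submodule R (regular_module R) (ann R M x)"
  shows "finitely_presented R M"
proof -
  let ?m = "ann R M x"
  let ?F = "free_module R 1"
  obtain T where T: "finite T" "T \<subseteq> ?m" "mod_span R (regular_module R) T = ?m"
    using fg unfolding fin_gen_submodule_def by blast
  define f where "f v = v 0 \<odot>\<^bsub>M\<^esub> x" for v :: "nat \<Rightarrow> 'a"
  define iota where "iota a = (\<lambda>i::nat. if i = 0 then a else \<zero>)" for a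
  have M: "lmod R M" using S unfolding simple_module_def lmod_iff by blast
  interpret M: lmod R M by fact
  have F: "lmod R ?F" by (rule free_lmod)
  have mc: "?m \<subseteq> carrier R" unfolding ann_def by blast
  have v0: "v 0 \<in> carrier R" if "v \<in> carrier ?F" for v
    using that unfolding free_simps mem_Collect_eq by blast
  have hom: "f \<in> mod_hom R ?F M"
    unfolding mod_hom_def
  proof (intro CollectI conjI ballI funcsetI)
    fix v assume "v \<in> carrier ?F"
    then have "v 0 \<in> carrier R" by (rule v0)
    then show "f v \<in> carrier M" using x M.sm_closed unfolding f_def by simp
  next
    fix v w assume "v \<in> carrier ?F" "w \<in> carrier ?F"
    then have "v 0 \<in> carrier R" "w 0 \<in> carrier R" using v0 by blast+
    then show "f (v \<oplus>\<^bsub>?F\<^esub> w) = f v \<oplus>\<^bsub>M\<^esub> f w" using x M.sm_ldistr unfolding f_def by simp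
  next
    fix a v assume "a \<in> carrier R" "v \<in> carrier ?F"
    moreover then have "v 0 \<in> carrier R" using v0 by blast
    ultimately show "f (a \<odot>\<^bsub>?F\<^esub> v) = a \<odot>\<^bsub>M\<^esub> f v" using x M.sm_assoc unfolding f_def by simp
  qed
  have iota_c: "iota a \<in> carrier ?F" if "a \<in> carrier R" for a using that unfolding iota_def by auto
  have f_iota: "f (iota a) = a \<odot>\<^bsub>M\<^esub> x" for a unfolding f_def iota_def by simp
  have ihom: "iota \<in> mod_hom R (regular_module R) ?F"
    unfolding mod_hom_def
  proof (intro CollectI conjI ballI funcsetI)
    fix a assume "a \<in> carrier (regular_module R)"
    then show "iota a \<in> carrier ?F" using iota_c by simp
  next
    fix a b assume "a \<in> carrier (regular_module R)" "b \<in> carrier (regular_module R)"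
    then show "iota (a \<oplus>\<^bsub>regular_module R\<^esub> b) = iota a \<oplus>\<^bsub>?F\<^esub> iota b"
      unfolding iota_def by (auto intro!: ext)
  next
    fix r a assume "r \<in> carrier R" "a \<in> carrier (regular_module R)"
    then show "iota (r \<odot>\<^bsub>regular_module R\<^esub> a) = r \<odot>\<^bsub>?F\<^esub> iota a"
      unfolding iota_def by (auto intro!: ext)
  qed
  have surj: "f ` carrier ?F = carrier M"
  proof
    show "f ` carrier ?F \<subseteq> carrier M" using hom unfolding mod_hom_def by auto
  next
    show "carrier M \<subseteq> f ` carrier ?F"
    proof
      fix y assume "y \<in> carrier M"
      then obtain a where a: "a \<in> carrier R" "y = a \<odot>\<^bsub>M\<^esub> x" using simple_gen[OF S x] by blast
      then have "y = f (iota a)" using f_iota by simp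
      then show "y \<in> f ` carrier ?F" using iota_c[OF a(1)] by blast
    qed
  qed
  let ?K = "mod_kernel ?F M f"
  have K: "submodule R ?F ?K" by (rule hom_kernel[OF F M hom])
  have TK: "iota ` T \<subseteq> ?K"
  proof
    fix w assume "w \<in> iota ` T"
    then obtain t where t: "t \<in> T" "w = iota t" by blast
    then have tc: "t \<in> carrier R" "t \<odot>\<^bsub>M\<^esub> x = \<zero>\<^bsub>M\<^esub>" using T(2) unfolding ann_def by auto
    then show "w \<in> ?K" unfolding mod_kernel_def using t iota_c f_iota by simp
  qed
  have "mod_span R ?F (iota ` T) = ?K"
  proof
    show "mod_span R ?F (iota ` T) \<subseteq> ?K" by (rule lmod.span_least[OF F K TK])
  next
    show "?K \<subseteq> mod_span R ?F (iota ` T)"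
    proof
      fix v assume v: "v \<in> ?K"
      then have vc: "v \<in> carrier ?F" and fv: "f v = \<zero>\<^bsub>M\<^esub>" unfolding mod_kernel_def by auto
      have "v = iota (v 0)"
      proof (rule ext)
        fix i show "v i = iota (v 0) i" using vc unfolding iota_def by (cases "i = 0") auto
      qed
      moreover have "v 0 \<in> carrier R" by (rule v0[OF vc])
      then have "v 0 \<in> ?m" unfolding ann_def using fv unfolding f_def by simp
      then have "v 0 \<in> mod_span R (regular_module R) T" using T(3) by simp
      then have "iota (v 0) \<in> iota ` mod_span R (regular_module R) T" by blast
      moreover have "iota ` mod_span R (regular_module R) T \<subseteq> mod_span R ?F (iota ` T)"
        by (rule hom_span[OF regular_lmod F ihom]) (use T mc in auto)
      ultimately show "v \<in> mod_span R ?F (iota ` T)" by auto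
    qed
  qed
  then have "fin_gen_submodule R ?F ?K" unfolding fin_gen_submodule_def using T(1) TK by blast
  then show ?thesis unfolding finitely_presented_def using hom surj by blast
qed

lemma fg_max:
  assumes mx: "maximal_left_ideal R m" and fin: "finite (carrier (R Quot JR))"
    and fgJ: "fin_gen_submodule R (regular_module R) JR"
  shows "fin_gen_submodule R (regular_module R) m"
proof -
  interpret RM: lmod R "regular_module R" by (rule regular_lmod)
  have L: "submodule R (regular_module R) m" by (rule max_lid[OF mx])
  have mc: "m \<subseteq> carrier R" using L unfolding lideal_iff by blast
  have madd: "\<And>a b. a \<in> m \<Longrightarrow> b \<in> m \<Longrightarrow> a \<oplus> b \<in> m" using L unfolding lideal_iff by blast
  have IJ: "additive_subgroup JR R" by (rule lideal_addsub[OF J_lid])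
  obtain SJ where SJ: "finite SJ" "SJ \<subseteq> JR" "mod_span R (regular_module R) SJ = JR"
    using fgJ unfolding fin_gen_submodule_def by blast
  define C where "C = {c \<in> carrier (R Quot JR). c \<inter> m \<noteq> {}}"
  define T where "T = (\<lambda>c. SOME a. a \<in> c \<inter> m) ` C"
  have Tm: "T \<subseteq> m"
  proof
    fix t assume "t \<in> T"
    then obtain c where c: "c \<in> C" "t = (SOME a. a \<in> c \<inter> m)" unfolding T_def by blast
    then have "\<exists>a. a \<in> c \<inter> m" unfolding C_def by blast
    then have "(SOME a. a \<in> c \<inter> m) \<in> c \<inter> m" by (rule someI_ex)
    then show "t \<in> m" using c by blast
  qed
  have Tfin: "finite T" unfolding T_def C_def using fin by simp
  let ?S = "SJ \<union> T"
  have Sm: "?S \<subseteq> m" using SJ(2) J_sub_max[OF mx] Tm by blast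
  have Sc: "?S \<subseteq> carrier R" using Sm mc by blast
  have "mod_span R (regular_module R) ?S = m"
  proof
    show "mod_span R (regular_module R) ?S \<subseteq> m" by (rule RM.span_least[OF L Sm])
  next
    show "m \<subseteq> mod_span R (regular_module R) ?S"
    proof
      fix y assume y: "y \<in> m"
      have yc: "y \<in> carrier R" using y mc by blast
      let ?c = "JR +> y"
      have cC: "?c \<in> C" unfolding C_def using yc quot_carrier rcos_self[OF IJ yc] y by auto
      define t where "t = (SOME a. a \<in> ?c \<inter> m)"
      have "\<exists>a. a \<in> ?c \<inter> m" using cC unfolding C_def by blast
      then have t: "t \<in> ?c \<inter> m" unfolding t_def by (rule someI_ex)
      have tT: "t \<in> T" unfolding T_def t_def using cC by blast
      have tc: "t \<in> carrier R" using t mc by blast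
      have "t \<ominus> y \<in> JR" using t rcos_mem[OF IJ yc] by blast
      then have "\<ominus> (t \<ominus> y) \<in> JR" using additive_subgroup.a_inv_closed[OF IJ] by blast
      moreover have "\<ominus> (t \<ominus> y) = y \<ominus> t" using tc yc by (simp add: a_minus_def minus_add a_comm)
      ultimately have yt: "y \<ominus> t \<in> JR" by simp
      have "JR \<subseteq> mod_span R (regular_module R) ?S"
        using SJ(3) RM.span_mono[of SJ ?S] by blast
      then have 1: "y \<ominus> t \<in> mod_span R (regular_module R) ?S" using yt by blast
      have 2: "t \<in> mod_span R (regular_module R) ?S" using RM.span_sub[of ?S] Sc tT by auto
      have "(y \<ominus> t) \<oplus> t \<in> mod_span R (regular_module R) ?S"
        using 1 2 RM.span_submodule[of ?S] unfolding RM.submodule_iff by simp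
      moreover have "(y \<ominus> t) \<oplus> t = y" using yc tc by (simp add: a_minus_def a_assoc l_neg)
      ultimately show "y \<in> mod_span R (regular_module R) ?S" by simp
    qed
  qed
  then show ?thesis unfolding fin_gen_submodule_def using SJ(1) Tfin Sm by blast
qed

lemma dir2:
  assumes fin: "finite (carrier (R Quot JR))"
    and fgJ: "fin_gen_submodule R (regular_module R) JR"
  shows "left_arithmetical R \<and> semilocal R"
proof
  show "semilocal R" unfolding semilocal_def left_artinian_def
  proof (intro allI impI)
    fix f :: "nat \<Rightarrow> 'a set set"
    assume H: "(\<forall>n. submodule (R Quot JR) (regular_module (R Quot JR)) (f n)) \<and> (\<forall>n. f (Suc n) \<subseteq> f n)"
    have "\<And>n. f n \<subseteq> carrier (R Quot JR)"
      using H unfolding submodule_def regular_module_def by auto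
    then show "\<exists>N. \<forall>n\<ge>N. f n = f N" using chain_stab[OF fin] H by blast
  qed
next
  show "left_arithmetical R" unfolding left_arithmetical_def
  proof (intro conjI allI impI)
    fix M :: "('a, 'a set) module"
    assume S: "simple_module R M"
    show "finite (carrier M)" by (rule simple_finite[OF S fin])
  next
    fix M :: "('a, 'a set) module"
    assume S: "simple_module R M"
    obtain x where x: "x \<in> carrier M" "x \<noteq> \<zero>\<^bsub>M\<^esub>" using simple_elem[OF S] by blast
    have "fin_gen_submodule R (regular_module R) (ann R M x)"
      by (rule fg_max[OF ann_max[OF S x] fin fgJ])
    then show "finitely_presented R M" by (rule simple_fp[OF S x])
  next
    fix n :: nat
    let ?F = "Qm R ` {m. maximal_left_ideal R m}"
    have "finite ?F" using finite_max[OF fin] by simp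
    moreover have "\<exists>N\<in>?F. mod_iso R M N"
      if "simple_module R M \<and> finite (carrier M) \<and> card (carrier M) = n" for M :: "('a, 'a set) module"
    proof -
      have S: "simple_module R M" using that by blast
      obtain x where x: "x \<in> carrier M" "x \<noteq> \<zero>\<^bsub>M\<^esub>" using simple_elem[OF S] by blast
      have "Qm R (ann R M x) \<in> ?F" using ann_max[OF S x] by blast
      then show ?thesis using simple_iso[OF S x] by blast
    qed
    ultimately show "\<exists>F :: ('a, 'a set) module set. finite F \<and>
           (\<forall>M :: ('a, 'a set) module. simple_module R M \<and> finite (carrier M) \<and> card (carrier M) = n
               \<longrightarrow> (\<exists>N \<in> F. mod_iso R M N))" by blast
  qed
qed

end

fun Gs :: "('a,'m) ring_scheme \<Rightarrow> (nat \<Rightarrow> 'a) \<Rightarrow> nat \<Rightarrow> (nat \<Rightarrow> 'a) \<Rightarrow> 'a" where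
  "Gs R c 0 w = \<zero>\<^bsub>R\<^esub>"
| "Gs R c (Suc k) w = Gs R c k w \<oplus>\<^bsub>R\<^esub> (w k \<otimes>\<^bsub>R\<^esub> c k)"

context ring begin

lemma Gs_closed:
  assumes c: "\<And>j. j < n \<Longrightarrow> c j \<in> carrier R" and w: "\<And>j. j < n \<Longrightarrow> w j \<in> carrier R"
  shows "k \<le> n \<Longrightarrow> Gs R c k w \<in> carrier R"
  by (induction k) (auto simp: c w)

lemma Gs_add:
  assumes c: "\<And>j. j < n \<Longrightarrow> c j \<in> carrier R" and w: "\<And>j. j < n \<Longrightarrow> w j \<in> carrier R"
    and v: "\<And>j. j < n \<Longrightarrow> v j \<in> carrier R"
  shows "k \<le> n \<Longrightarrow> Gs R c k (\<lambda>i. w i \<oplus> v i) = Gs R c k w \<oplus> Gs R c k v"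
proof (induction k)
  case 0 then show ?case by simp
next
  case (Suc k)
  then have k: "k < n" by simp
  have cl: "Gs R c k w \<in> carrier R" "Gs R c k v \<in> carrier R"
    using Gs_closed[OF c w] Gs_closed[OF c v] k by auto
  show ?case using Suc k cl c[OF k] w[OF k] v[OF k] by (simp add: l_distr a_ac)
qed

lemma Gs_smult:
  assumes c: "\<And>j. j < n \<Longrightarrow> c j \<in> carrier R" and w: "\<And>j. j < n \<Longrightarrow> w j \<in> carrier R"
    and a: "a \<in> carrier R"
  shows "k \<le> n \<Longrightarrow> Gs R c k (\<lambda>i. a \<otimes> w i) = a \<otimes> Gs R c k w"
proof (induction k)
  case 0 then show ?case using a by simp
next
  case (Suc k)
  then have k: "k < n" by simp
  have cl: "Gs R c k w \<in> carrier R" using Gs_closed[OF c w] k by auto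
  show ?case using Suc k cl c[OF k] w[OF k] a by (simp add: r_distr m_assoc)
qed

lemma Gs_cong:
  assumes "\<And>j. j < k \<Longrightarrow> w j = v j"
  shows "Gs R c k w = Gs R c k v"
  using assms by (induction k) auto

lemma fp_fg:
  assumes L: "submodule R (regular_module R) m" and fp: "finitely_presented R (Qm R m)"
  shows "fin_gen_submodule R (regular_module R) m"
proof -
  obtain n f where f: "f \<in> mod_hom R (free_module R n) (Qm R m)"
    and surj: "f ` carrier (free_module R n) = carrier (Qm R m)"
    and fgK: "fin_gen_submodule R (free_module R n) (mod_kernel (free_module R n) (Qm R m) f)"
    using fp unfolding finitely_presented_def by blast
  let ?F = "free_module R n"
  let ?K = "mod_kernel ?F (Qm R m) f"
  have Qm: "lmod R (Qm R m)" by (rule Q_lmod[OF L])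
  interpret Q: lmod R "Qm R m" by fact
  interpret RM: lmod R "regular_module R" by (rule regular_lmod)
  have F: "lmod R ?F" by (rule free_lmod)
  interpret FM: lmod R ?F by fact
  have I: "additive_subgroup m R" by (rule lideal_addsub[OF L])
  have mc: "m \<subseteq> carrier R" using L unfolding lideal_iff by blast
  have fc: "\<And>v. v \<in> carrier ?F \<Longrightarrow> f v \<in> carrier (Qm R m)"
    and fadd: "\<And>v w. v \<in> carrier ?F \<Longrightarrow> w \<in> carrier ?F \<Longrightarrow> f (v \<oplus>\<^bsub>?F\<^esub> w) = f v \<oplus>\<^bsub>Qm R m\<^esub> f w"
    and fsm: "\<And>a v. a \<in> carrier R \<Longrightarrow> v \<in> carrier ?F \<Longrightarrow> f (a \<odot>\<^bsub>?F\<^esub> v) = a \<odot>\<^bsub>Qm R m\<^esub> f v"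
    using f unfolding mod_hom_def by auto
  have wc: "w j \<in> carrier R" if "w \<in> carrier ?F" "j < n" for w j
    using that unfolding free_simps mem_Collect_eq by blast
  have wz: "w j = \<zero>" if "w \<in> carrier ?F" "n \<le> j" for w j
    using that unfolding free_simps mem_Collect_eq by blast
  define e where "e j = (\<lambda>i::nat. if i = j then \<one> else \<zero>)" for j
  have ec: "e j \<in> carrier ?F" if "j < n" for j using that unfolding e_def by auto
  define c where "c j = (SOME a. a \<in> carrier R \<and> f (e j) = m +> a)" for j
  have cprop: "c j \<in> carrier R \<and> f (e j) = m +> c j" if "j < n" for j
  proof -
    have "f (e j) \<in> carrier (Qm R m)" using fc ec that by blast
    then have "\<exists>a. a \<in> carrier R \<and> f (e j) = m +> a" using Q_elem by blast
    then show ?thesis unfolding c_def by (rule someI_ex)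
  qed
  have cc: "\<And>j. j < n \<Longrightarrow> c j \<in> carrier R" using cprop by blast
  have claim: "\<forall>w. w \<in> carrier ?F \<longrightarrow> (\<forall>i\<ge>k. w i = \<zero>) \<longrightarrow> f w = m +> Gs R c k w"
    if "k \<le> n" for k
    using that
  proof (induction k)
    case 0
    show ?case
    proof (intro allI impI)
      fix w assume w: "w \<in> carrier ?F" "\<forall>i\<ge>0. w i = \<zero>"
      then have "w = \<zero>\<^bsub>?F\<^esub>" by (simp add: fun_eq_iff)
      then have "f w = \<zero>\<^bsub>Qm R m\<^esub>" using hom_zero[OF F Qm f] by simp
      then show "f w = m +> Gs R c 0 w" using Q_zero[OF L] by simp
    qed
  next
    case (Suc k)
    then have k: "k < n" and IH: "\<forall>w. w \<in> carrier ?F \<longrightarrow> (\<forall>i\<ge>k. w i = \<zero>) \<longrightarrow> f w = m +> Gs R c k w"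
      by auto
    show ?case
    proof (intro allI impI)
      fix w assume w: "w \<in> carrier ?F" "\<forall>i\<ge>Suc k. w i = \<zero>"
      define w' where "w' = w(k := \<zero>)"
      have wkc: "w k \<in> carrier R" using wc[OF w(1) k] .
      have w'c: "w' \<in> carrier ?F" using w(1) unfolding w'_def free_simps mem_Collect_eq by auto
      have w'z: "\<forall>i\<ge>k. w' i = \<zero>" using w(2) unfolding w'_def by (auto simp: Suc_le_eq)
      have ekc: "e k \<in> carrier ?F" by (rule ec[OF k])
      have decomp: "w = w' \<oplus>\<^bsub>?F\<^esub> (w k \<odot>\<^bsub>?F\<^esub> e k)"
      proof (simp, rule ext)
        fix i
        show "w i = w' i \<oplus> w k \<otimes> e k i"
        proof (cases "i = k")
          case True then show ?thesis unfolding w'_def e_def using wkc by simp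
        next
          case False
          have "w i \<in> carrier R"
            using wc[OF w(1)] wz[OF w(1)] by (cases "i < n") auto
          then show ?thesis unfolding w'_def e_def using False wkc by simp
        qed
      qed
      have "f w = f (w' \<oplus>\<^bsub>?F\<^esub> (w k \<odot>\<^bsub>?F\<^esub> e k))"
        using decomp by (rule arg_cong[where f=f])
      also have "\<dots> = f w' \<oplus>\<^bsub>Qm R m\<^esub> (w k \<odot>\<^bsub>Qm R m\<^esub> f (e k))"
        using fadd[OF w'c FM.sm_closed[OF wkc ekc]] fsm[OF wkc ekc] by simp
      also have "\<dots> = (m +> Gs R c k w') \<oplus>\<^bsub>Qm R m\<^esub> (w k \<odot>\<^bsub>Qm R m\<^esub> (m +> c k))"
        using IH w'c w'z cprop[OF k] by simp
      also have "Gs R c k w' = Gs R c k w" by (rule Gs_cong) (simp add: w'_def)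
      also have "w k \<odot>\<^bsub>Qm R m\<^esub> (m +> c k) = m +> (w k \<otimes> c k)" by (rule Q_smult[OF L wkc cc[OF k]])
      also have "(m +> Gs R c k w) \<oplus>\<^bsub>Qm R m\<^esub> (m +> (w k \<otimes> c k)) = m +> (Gs R c k w \<oplus> w k \<otimes> c k)"
        using Q_add[OF L] Gs_closed[OF cc wc[OF w(1)], of k] k wkc cc[OF k] by simp
      finally show "f w = m +> Gs R c (Suc k) w" by simp
    qed
  qed
  define g where "g w = Gs R c n w" for w
  have fg: "f w = m +> g w" if "w \<in> carrier ?F" for w
    using claim[of n] that wz[OF that] unfolding g_def by auto
  have gc: "g w \<in> carrier R" if "w \<in> carrier ?F" for w
    unfolding g_def using Gs_closed[OF cc wc[OF that]] by simp
  have ghom: "g \<in> mod_hom R ?F (regular_module R)"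
    unfolding mod_hom_def
  proof (intro CollectI conjI ballI funcsetI)
    fix w assume "w \<in> carrier ?F"
    then show "g w \<in> carrier (regular_module R)" using gc by simp
  next
    fix v w assume v: "v \<in> carrier ?F" and w: "w \<in> carrier ?F"
    show "g (v \<oplus>\<^bsub>?F\<^esub> w) = g v \<oplus>\<^bsub>regular_module R\<^esub> g w"
      unfolding g_def using Gs_add[OF cc wc[OF v] wc[OF w], of n] by simp
  next
    fix a w assume a: "a \<in> carrier R" and w: "w \<in> carrier ?F"
    show "g (a \<odot>\<^bsub>?F\<^esub> w) = a \<odot>\<^bsub>regular_module R\<^esub> g w"
      unfolding g_def using Gs_smult[OF cc wc[OF w] a, of n] by simp
  qed
  obtain S where S: "finite S" "S \<subseteq> ?K" "mod_span R ?F S = ?K"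
    using fgK unfolding fin_gen_submodule_def by blast
  have SF: "S \<subseteq> carrier ?F" using S(2) unfolding mod_kernel_def by auto
  have "m +> \<one> \<in> carrier (Qm R m)" by simp
  then have "m +> \<one> \<in> f ` carrier ?F" using surj by simp
  then obtain v where v: "v \<in> carrier ?F" "f v = m +> \<one>" by blast
  have gvc: "g v \<in> carrier R" by (rule gc[OF v(1)])
  define d where "d = \<one> \<ominus> g v"
  have "m +> g v = m +> \<one>" using fg[OF v(1)] v(2) by simp
  then have "g v \<ominus> \<one> \<in> m" using rcos_eq[OF I gvc one_closed] by simp
  then have "\<ominus> (g v \<ominus> \<one>) \<in> m" using additive_subgroup.a_inv_closed[OF I] by blast
  moreover have "\<ominus> (g v \<ominus> \<one>) = d" unfolding d_def using gvc by (simp add: a_minus_def minus_add a_comm)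
  ultimately have dm: "d \<in> m" by simp
  have gSm: "g ` S \<subseteq> m"
  proof
    fix y assume "y \<in> g ` S"
    then obtain s where s: "s \<in> S" "y = g s" by blast
    then have sc: "s \<in> carrier ?F" and fs: "f s = m" using S(2) unfolding mod_kernel_def by auto
    then have "m +> g s = m" using fg by simp
    then show "y \<in> m" using rcos_zero[OF I gc[OF sc]] s by simp
  qed
  let ?T = "insert d (g ` S)"
  have Tm: "?T \<subseteq> m" using dm gSm by blast
  have Tc: "?T \<subseteq> carrier R" using Tm mc by blast
  have "mod_span R (regular_module R) ?T = m"
  proof
    show "mod_span R (regular_module R) ?T \<subseteq> m" by (rule RM.span_least[OF L Tm])
  next
    show "m \<subseteq> mod_span R (regular_module R) ?T"
    proof
      fix a assume am: "a \<in> m"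
      have ac: "a \<in> carrier R" using am mc by blast
      let ?h = "a \<odot>\<^bsub>?F\<^esub> v"
      have hc: "?h \<in> carrier ?F" using FM.sm_closed[OF ac v(1)] .
      have "f ?h = a \<odot>\<^bsub>Qm R m\<^esub> (m +> \<one>)" using fsm[OF ac v(1)] v(2) by simp
      also have "\<dots> = m +> a" using Q_smult[OF L ac one_closed] ac by simp
      also have "\<dots> = m" using rcos_zero[OF I ac] am by simp
      finally have "?h \<in> ?K" unfolding mod_kernel_def using hc by simp
      then have "g ?h \<in> g ` mod_span R ?F S" using S(3) by blast
      also have "\<dots> \<subseteq> mod_span R (regular_module R) (g ` S)" by (rule hom_span[OF F regular_lmod ghom SF])
      also have "\<dots> \<subseteq> mod_span R (regular_module R) ?T" by (rule RM.span_mono) blast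
      finally have 1: "g ?h \<in> mod_span R (regular_module R) ?T" .
      have "g ?h = a \<otimes> g v" unfolding g_def using Gs_smult[OF cc wc[OF v(1)] ac, of n] by simp
      then have 1: "a \<otimes> g v \<in> mod_span R (regular_module R) ?T" using 1 by simp
      have "d \<in> mod_span R (regular_module R) ?T" using RM.span_sub[of ?T] Tc by auto
      then have 2: "a \<otimes> d \<in> mod_span R (regular_module R) ?T"
        using RM.span_submodule[of ?T] ac unfolding RM.submodule_iff by simp
      have 3: "a \<otimes> g v \<oplus> a \<otimes> d \<in> mod_span R (regular_module R) ?T"
        using 1 2 RM.span_submodule[of ?T] unfolding RM.submodule_iff by simp
      have "g v \<oplus> d = \<one> \<oplus> (g v \<oplus> \<ominus> g v)" unfolding d_def a_minus_def
        by (rule a_lcomm) (use gvc in auto)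
      also have "\<dots> = \<one>" using gvc by (simp add: r_neg)
      finally have "g v \<oplus> d = \<one>" .
      then have gd: "g v \<oplus> d = \<one>" .
      have dc: "d \<in> carrier R" using dm mc by blast
      have "a \<otimes> g v \<oplus> a \<otimes> d = a \<otimes> (g v \<oplus> d)" using ac gvc dc by (simp add: r_distr)
      also have "\<dots> = a" using gd ac by simp
      finally have "a \<otimes> g v \<oplus> a \<otimes> d = a" .
      then show "a \<in> mod_span R (regular_module R) ?T" using 3 by simp
    qed
  qed
  moreover have "finite ?T" using S(1) by simp
  ultimately show ?thesis unfolding fin_gen_submodule_def using Tm by blast
qed

end

context ring begin

lemma lid_facts:
  assumes I: "submodule R (regular_module R) I"
  shows "I \<subseteq> carrier R" "\<zero> \<in> I" "\<And>x y. x \<in> I \<Longrightarrow> y \<in> I \<Longrightarrow> x \<oplus> y \<in> I"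
    "\<And>a x. a \<in> carrier R \<Longrightarrow> x \<in> I \<Longrightarrow> a \<otimes> x \<in> I"
    "\<And>x. x \<in> I \<Longrightarrow> \<ominus> x \<in> I"
proof -
  show "I \<subseteq> carrier R" "\<zero> \<in> I" "\<And>x y. x \<in> I \<Longrightarrow> y \<in> I \<Longrightarrow> x \<oplus> y \<in> I"
    "\<And>a x. a \<in> carrier R \<Longrightarrow> x \<in> I \<Longrightarrow> a \<otimes> x \<in> I"
    using I unfolding lideal_iff by blast+
  show "\<And>x. x \<in> I \<Longrightarrow> \<ominus> x \<in> I"
    using additive_subgroup.a_inv_closed[OF lideal_addsub[OF I]] by blast
qed

lemma lid_cancel:
  assumes I: "submodule R (regular_module R) I" and x: "x \<in> I" and y: "y \<in> carrier R"
    and xy: "x \<oplus> y \<in> I"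
  shows "y \<in> I"
proof -
  have xc: "x \<in> carrier R" using lid_facts(1)[OF I] x by blast
  have "\<ominus> x \<oplus> (x \<oplus> y) = y" using xc y by (rule r_neg1)
  moreover have "\<ominus> x \<oplus> (x \<oplus> y) \<in> I" using lid_facts(3,5)[OF I] x xy by blast
  ultimately show ?thesis by simp
qed

lemma rmult_hom:
  assumes c: "c \<in> carrier R"
  shows "(\<lambda>z. z \<otimes> c) \<in> mod_hom R (regular_module R) (regular_module R)"
  unfolding mod_hom_def
proof (intro CollectI conjI ballI funcsetI)
  fix z assume "z \<in> carrier (regular_module R)"
  then show "z \<otimes> c \<in> carrier (regular_module R)" using c by simp
next
  fix x y assume "x \<in> carrier (regular_module R)" "y \<in> carrier (regular_module R)"
  then show "(x \<oplus>\<^bsub>regular_module R\<^esub> y) \<otimes> c = x \<otimes> c \<oplus>\<^bsub>regular_module R\<^esub> y \<otimes> c"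
    using c by (simp add: l_distr)
next
  fix a x assume "a \<in> carrier R" "x \<in> carrier (regular_module R)"
  then show "(a \<odot>\<^bsub>regular_module R\<^esub> x) \<otimes> c = a \<odot>\<^bsub>regular_module R\<^esub> (x \<otimes> c)"
    using c by (simp add: m_assoc)
qed

lemma int_lid:
  assumes I: "submodule R (regular_module R) I" and L: "submodule R (regular_module R) L"
  shows "submodule R (regular_module R) (I \<inter> L)"
  using I L unfolding lideal_iff by blast

lemma int_fg:
  assumes I: "submodule R (regular_module R) I" and L: "submodule R (regular_module R) L"
    and fI: "fin_gen_submodule R (regular_module R) I" and fL: "fin_gen_submodule R (regular_module R) L"
    and u: "u \<in> I" and l: "l \<in> L" and ul: "u \<oplus> l = \<one>"
  shows "fin_gen_submodule R (regular_module R) (I \<inter> L)"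
proof -
  interpret RM: lmod R "regular_module R" by (rule regular_lmod)
  obtain S1 where S1: "finite S1" "S1 \<subseteq> I" "mod_span R (regular_module R) S1 = I"
    using fI unfolding fin_gen_submodule_def by blast
  obtain S2 where S2: "finite S2" "S2 \<subseteq> L" "mod_span R (regular_module R) S2 = L"
    using fL unfolding fin_gen_submodule_def by blast
  have Ic: "I \<subseteq> carrier R" and Lc: "L \<subseteq> carrier R" using lid_facts(1) I L by auto
  have uc: "u \<in> carrier R" and lc: "l \<in> carrier R" using u l Ic Lc by auto
  define T where "T = (\<lambda>p. p \<otimes> l) ` S1 \<union> (\<lambda>q. q \<otimes> u) ` S2"
  have split: "z \<otimes> u \<oplus> z \<otimes> l = z" if "z \<in> carrier R" for z
  proof -
    have "z \<otimes> u \<oplus> z \<otimes> l = z \<otimes> (u \<oplus> l)" using r_distr[OF uc lc that] by simp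
    also have "\<dots> = z" using ul that by simp
    finally show ?thesis .
  qed
  have T1: "p \<otimes> l \<in> I \<inter> L" if "p \<in> S1" for p
  proof -
    have p: "p \<in> I" "p \<in> carrier R" using that S1(2) Ic by auto
    have pl: "p \<otimes> l \<in> L" using lid_facts(4)[OF L p(2) l] .
    have pu: "p \<otimes> u \<in> I" using lid_facts(4)[OF I p(2) u] .
    have "p \<otimes> u \<oplus> p \<otimes> l \<in> I" using split[OF p(2)] p(1) by simp
    then have "p \<otimes> l \<in> I" using lid_cancel[OF I pu] p(2) lc by simp
    then show ?thesis using pl by blast
  qed
  have T2: "q \<otimes> u \<in> I \<inter> L" if "q \<in> S2" for q
  proof -
    have q: "q \<in> L" "q \<in> carrier R" using that S2(2) Lc by auto
    have ql: "q \<otimes> l \<in> L" using lid_facts(4)[OF L q(2) l] .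
    have qu: "q \<otimes> u \<in> I" using lid_facts(4)[OF I q(2) u] .
    have "q \<otimes> l \<oplus> q \<otimes> u = q" using split[OF q(2)] q(2) uc lc by (simp add: a_comm)
    then have "q \<otimes> l \<oplus> q \<otimes> u \<in> L" using q(1) by simp
    then have "q \<otimes> u \<in> L" using lid_cancel[OF L ql] q(2) uc by simp
    then show ?thesis using qu by blast
  qed
  have TIL: "T \<subseteq> I \<inter> L" unfolding T_def using T1 T2 by blast
  have Tc: "T \<subseteq> carrier R" using TIL Ic by blast
  have IL: "submodule R (regular_module R) (I \<inter> L)" by (rule int_lid[OF I L])
  have "mod_span R (regular_module R) T = I \<inter> L"
  proof
    show "mod_span R (regular_module R) T \<subseteq> I \<inter> L" by (rule RM.span_least[OF IL TIL])
  next
    show "I \<inter> L \<subseteq> mod_span R (regular_module R) T"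
    proof
      fix y assume y: "y \<in> I \<inter> L"
      have yc: "y \<in> carrier R" using y Ic by blast
      have S1c: "S1 \<subseteq> carrier (regular_module R)" using S1(2) Ic by simp
      have S2c: "S2 \<subseteq> carrier (regular_module R)" using S2(2) Lc by simp
      have "y \<otimes> l \<in> (\<lambda>z. z \<otimes> l) ` mod_span R (regular_module R) S1" using y S1(3) by blast
      also have "\<dots> \<subseteq> mod_span R (regular_module R) ((\<lambda>z. z \<otimes> l) ` S1)"
        by (rule hom_span[OF regular_lmod regular_lmod rmult_hom[OF lc] S1c])
      also have "\<dots> \<subseteq> mod_span R (regular_module R) T" by (rule RM.span_mono) (auto simp: T_def)
      finally have 1: "y \<otimes> l \<in> mod_span R (regular_module R) T" .
      have "y \<otimes> u \<in> (\<lambda>z. z \<otimes> u) ` mod_span R (regular_module R) S2" using y S2(3) by blast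
      also have "\<dots> \<subseteq> mod_span R (regular_module R) ((\<lambda>z. z \<otimes> u) ` S2)"
        by (rule hom_span[OF regular_lmod regular_lmod rmult_hom[OF uc] S2c])
      also have "\<dots> \<subseteq> mod_span R (regular_module R) T" by (rule RM.span_mono) (auto simp: T_def)
      finally have 2: "y \<otimes> u \<in> mod_span R (regular_module R) T" .
      have "y \<otimes> u \<oplus> y \<otimes> l \<in> mod_span R (regular_module R) T"
        using 1 2 RM.span_submodule[of T] unfolding RM.submodule_iff by simp
      then show "y \<in> mod_span R (regular_module R) T" using split[OF yc] by simp
    qed
  qed
  moreover have "finite T" unfolding T_def using S1(1) S2(1) by simp
  ultimately show ?thesis unfolding fin_gen_submodule_def using TIL by blast
qed

lemma lid_sum:
  assumes I: "submodule R (regular_module R) I" and K: "submodule R (regular_module R) K"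
  shows "submodule R (regular_module R) {x \<oplus> y | x y. x \<in> I \<and> y \<in> K}"
proof -
  have Ic: "I \<subseteq> carrier R" and Kc: "K \<subseteq> carrier R" using lid_facts(1) I K by auto
  show ?thesis unfolding lideal_iff
  proof (intro conjI ballI)
    show "{x \<oplus> y | x y. x \<in> I \<and> y \<in> K} \<subseteq> carrier R" using Ic Kc by auto
    have "\<zero> = \<zero> \<oplus> \<zero>" by simp
    then show "\<zero> \<in> {x \<oplus> y | x y. x \<in> I \<and> y \<in> K}" using lid_facts(2)[OF I] lid_facts(2)[OF K] by blast
  next
    fix a b assume "a \<in> {x \<oplus> y | x y. x \<in> I \<and> y \<in> K}" "b \<in> {x \<oplus> y | x y. x \<in> I \<and> y \<in> K}"
    then obtain x1 y1 x2 y2 where H: "x1 \<in> I" "y1 \<in> K" "x2 \<in> I" "y2 \<in> K" "a = x1 \<oplus> y1" "b = x2 \<oplus> y2"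
      by blast
    have c: "x1 \<in> carrier R" "y1 \<in> carrier R" "x2 \<in> carrier R" "y2 \<in> carrier R" using H Ic Kc by auto
    have "a \<oplus> b = (x1 \<oplus> x2) \<oplus> (y1 \<oplus> y2)" using H(5,6) c by (simp add: a_ac)
    moreover have "x1 \<oplus> x2 \<in> I" "y1 \<oplus> y2 \<in> K" using lid_facts(3) I K H by auto
    ultimately show "a \<oplus> b \<in> {x \<oplus> y | x y. x \<in> I \<and> y \<in> K}" by blast
  next
    fix r a assume r: "r \<in> carrier R" and "a \<in> {x \<oplus> y | x y. x \<in> I \<and> y \<in> K}"
    then obtain x y where H: "x \<in> I" "y \<in> K" "a = x \<oplus> y" by blast
    have c: "x \<in> carrier R" "y \<in> carrier R" using H Ic Kc by auto
    have "r \<otimes> a = r \<otimes> x \<oplus> r \<otimes> y" using H(3) c r by (simp add: r_distr)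
    moreover have "r \<otimes> x \<in> I" "r \<otimes> y \<in> K" using lid_facts(4) I K H r by auto
    ultimately show "r \<otimes> a \<in> {x \<oplus> y | x y. x \<in> I \<and> y \<in> K}" by blast
  qed
qed

lemma comax:
  assumes mx: "maximal_left_ideal R m" and I: "submodule R (regular_module R) I" and nI: "\<not> I \<subseteq> m"
  shows "\<exists>u\<in>I. \<exists>l\<in>m. u \<oplus> l = \<one>"
proof -
  let ?P = "{x \<oplus> y | x y. x \<in> I \<and> y \<in> m}"
  have L: "submodule R (regular_module R) m" by (rule max_lid[OF mx])
  have P: "submodule R (regular_module R) ?P" by (rule lid_sum[OF I L])
  have Ic: "I \<subseteq> carrier R" and mc: "m \<subseteq> carrier R" using lid_facts(1) I L by auto
  have mP: "m \<subseteq> ?P"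
  proof
    fix y assume y: "y \<in> m"
    then have "y = \<zero> \<oplus> y" using mc by auto
    then show "y \<in> ?P" using y lid_facts(2)[OF I] by blast
  qed
  obtain x where x: "x \<in> I" "x \<notin> m" using nI by blast
  have "x = x \<oplus> \<zero>" using x Ic by auto
  then have "x \<in> ?P" using x lid_facts(2)[OF L] by blast
  then have "?P \<noteq> m" using x by blast
  then have "?P = carrier R" using mx P mP unfolding maximal_left_ideal_def by blast
  then have "\<one> \<in> ?P" by simp
  then obtain u l where ul: "u \<in> I" "l \<in> m" "\<one> = u \<oplus> l" by blast
  from ul(3) have "u \<oplus> l = \<one>" by simp
  with ul(1,2) show ?thesis by blast
qed

end

context ring begin

definition nxt :: "'a set \<Rightarrow> 'a set" where
  "nxt I = (if \<exists>m. maximal_left_ideal R m \<and> \<not> I \<subseteq> m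
            then I \<inter> (SOME m. maximal_left_ideal R m \<and> \<not> I \<subseteq> m) else I)"

definition chn :: "nat \<Rightarrow> 'a set" where "chn k = (nxt ^^ k) (carrier R)"

lemma chn_0: "chn 0 = carrier R" by (simp add: chn_def)
lemma chn_Suc: "chn (Suc k) = nxt (chn k)" by (simp add: chn_def)

definition good :: "'a set \<Rightarrow> bool" where
  "good I \<longleftrightarrow> submodule R (regular_module R) I \<and> JR \<subseteq> I \<and>
     fin_gen_submodule R (regular_module R) I \<and> finite ((\<lambda>a. I +> a) ` carrier R)"

lemma arith_fin:
  assumes ar: "left_arithmetical R" and mx: "maximal_left_ideal R m"
  shows "finite (carrier (Qm R m))"
  using ar Q_simple[OF mx] unfolding left_arithmetical_def by blast

lemma arith_fg:
  assumes ar: "left_arithmetical R" and mx: "maximal_left_ideal R m"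
  shows "fin_gen_submodule R (regular_module R) m"
proof -
  have "finitely_presented R (Qm R m)" using ar Q_simple[OF mx] unfolding left_arithmetical_def by blast
  then show ?thesis by (rule fp_fg[OF max_lid[OF mx]])
qed

lemma good_carrier: "good (carrier R)"
proof -
  interpret RM: lmod R "regular_module R" by (rule regular_lmod)
  have I: "additive_subgroup (carrier R) R" by (rule lideal_addsub[OF carrier_lid])
  have "mod_span R (regular_module R) {\<one>} = carrier R"
  proof
    show "mod_span R (regular_module R) {\<one>} \<subseteq> carrier R" using RM.span_carrier by simp
  next
    show "carrier R \<subseteq> mod_span R (regular_module R) {\<one>}"
    proof
      fix a assume a: "a \<in> carrier R"
      have "\<one> \<in> mod_span R (regular_module R) {\<one>}" using RM.span_sub[of "{\<one>}"] by simp
      moreover have "\<forall>a\<in>carrier R. \<forall>x\<in>mod_span R (regular_module R) {\<one>}. a \<otimes> x \<in> mod_span R (regular_module R) {\<one>}"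
        using RM.span_submodule[of "{\<one>}"] unfolding RM.submodule_iff by simp
      ultimately have "a \<otimes> \<one> \<in> mod_span R (regular_module R) {\<one>}" using a by blast
      then show "a \<in> mod_span R (regular_module R) {\<one>}" using a by simp
    qed
  qed
  then have fg: "fin_gen_submodule R (regular_module R) (carrier R)"
    unfolding fin_gen_submodule_def by blast
  have "(\<lambda>a. carrier R +> a) ` carrier R \<subseteq> {carrier R}" using rcos_zero[OF I] by auto
  then have "finite ((\<lambda>a. carrier R +> a) ` carrier R)" using finite_subset by blast
  then show ?thesis unfolding good_def using carrier_lid fg J_carrier by blast
qed

lemma good_nxt:
  assumes ar: "left_arithmetical R" and g: "good I"
  shows "good (nxt I)"
proof (cases "\<exists>m. maximal_left_ideal R m \<and> \<not> I \<subseteq> m")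
  case False
  have "nxt I = I" unfolding nxt_def using False by (rule if_not_P)
  then show ?thesis using g by simp
next
  case True
  define m where "m = (SOME m. maximal_left_ideal R m \<and> \<not> I \<subseteq> m)"
  have "maximal_left_ideal R m \<and> \<not> I \<subseteq> m" unfolding m_def using True by (rule someI_ex)
  then have mx: "maximal_left_ideal R m" and nI: "\<not> I \<subseteq> m" by auto
  have nx: "nxt I = I \<inter> m" unfolding nxt_def m_def using True by simp
  have I: "submodule R (regular_module R) I" and JI: "JR \<subseteq> I"
    and fgI: "fin_gen_submodule R (regular_module R) I" and finI: "finite ((\<lambda>a. I +> a) ` carrier R)"
    using g unfolding good_def by auto
  have L: "submodule R (regular_module R) m" by (rule max_lid[OF mx])
  have IL: "submodule R (regular_module R) (I \<inter> m)" by (rule int_lid[OF I L])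
  have JIL: "JR \<subseteq> I \<inter> m" using JI J_sub_max[OF mx] by blast
  obtain u l where ul: "u \<in> I" "l \<in> m" "u \<oplus> l = \<one>" using comax[OF mx I nI] by blast
  have fg: "fin_gen_submodule R (regular_module R) (I \<inter> m)"
    by (rule int_fg[OF I L fgI arith_fg[OF ar mx] ul])
  have aI: "additive_subgroup I R" by (rule lideal_addsub[OF I])
  have aL: "additive_subgroup m R" by (rule lideal_addsub[OF L])
  have aIL: "additive_subgroup (I \<inter> m) R" by (rule lideal_addsub[OF IL])
  have f1: "finite ((\<lambda>a. (I +> a, m +> a)) ` carrier R)"
  proof -
    have "(\<lambda>a. (I +> a, m +> a)) ` carrier R \<subseteq> ((\<lambda>a. I +> a) ` carrier R) \<times> carrier (Qm R m)"
      by (auto simp: Q_carrier)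
    moreover have "finite (((\<lambda>a. I +> a) ` carrier R) \<times> carrier (Qm R m))"
      using finI arith_fin[OF ar mx] by simp
    ultimately show ?thesis using finite_subset by blast
  qed
  have "finite ((\<lambda>a. (I \<inter> m) +> a) ` carrier R)"
  proof (rule finite_image_factor[OF f1])
    fix a b assume a: "a \<in> carrier R" and b: "b \<in> carrier R"
      and e: "(I +> a, m +> a) = (I +> b, m +> b)"
    then have "a \<ominus> b \<in> I" "a \<ominus> b \<in> m" using rcos_eq[OF aI a b] rcos_eq[OF aL a b] by auto
    then show "(I \<inter> m) +> a = (I \<inter> m) +> b" using rcos_eq[OF aIL a b] by simp
  qed
  then show ?thesis unfolding good_def nx using IL JIL fg by blast
qed

lemma good_chn:
  assumes ar: "left_arithmetical R"
  shows "good (chn k)"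
  by (induction k) (simp_all add: chn_0 chn_Suc good_carrier good_nxt[OF ar])

lemma img_lid:
  assumes g: "good I"
  shows "submodule (R Quot JR) (regular_module (R Quot JR)) ((\<lambda>a. JR +> a) ` I)"
proof -
  have Qr: "ring (R Quot JR)" by (rule ideal.quotient_is_ring[OF J_ideal])
  have I: "submodule R (regular_module R) I" using g unfolding good_def by blast
  have Ic: "I \<subseteq> carrier R" by (rule lid_facts(1)[OF I])
  have aJ: "additive_subgroup JR R" by (rule lideal_addsub[OF J_lid])
  show ?thesis unfolding ring.lideal_iff[OF Qr]
  proof (intro conjI ballI)
    show "(\<lambda>a. JR +> a) ` I \<subseteq> carrier (R Quot JR)" using Ic quot_carrier by auto
    have "JR +> \<zero> = JR" by (rule Q_zero[OF J_lid])
    then show "\<zero>\<^bsub>R Quot JR\<^esub> \<in> (\<lambda>a. JR +> a) ` I" using lid_facts(2)[OF I]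
      unfolding FactRing_def by force
  next
    fix X Y assume "X \<in> (\<lambda>a. JR +> a) ` I" "Y \<in> (\<lambda>a. JR +> a) ` I"
    then obtain a b where ab: "a \<in> I" "b \<in> I" "X = JR +> a" "Y = JR +> b" by blast
    have "X \<oplus>\<^bsub>R Quot JR\<^esub> Y = JR +> (a \<oplus> b)"
      using rcos_sum[OF aJ] ab Ic unfolding FactRing_def by auto
    moreover have "a \<oplus> b \<in> I" using lid_facts(3)[OF I] ab by blast
    ultimately show "X \<oplus>\<^bsub>R Quot JR\<^esub> Y \<in> (\<lambda>a. JR +> a) ` I" by blast
  next
    fix X Y assume "X \<in> carrier (R Quot JR)" "Y \<in> (\<lambda>a. JR +> a) ` I"
    then obtain r a where ra: "r \<in> carrier R" "a \<in> I" "X = JR +> r" "Y = JR +> a"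
      using quot_carrier by auto
    have "X \<otimes>\<^bsub>R Quot JR\<^esub> Y = JR +> (r \<otimes> a)"
      using ideal.rcoset_mult_add[OF J_ideal, of r a] ra Ic unfolding FactRing_def by auto
    moreover have "r \<otimes> a \<in> I" using lid_facts(4)[OF I] ra by blast
    ultimately show "X \<otimes>\<^bsub>R Quot JR\<^esub> Y \<in> (\<lambda>a. JR +> a) ` I" by blast
  qed
qed

lemma chain_ends:
  assumes ar: "left_arithmetical R" and sl: "semilocal R"
  shows "\<exists>k. \<forall>m. maximal_left_ideal R m \<longrightarrow> chn k \<subseteq> m"
proof (rule ccontr)
  assume "\<not> ?thesis"
  then have ex: "\<And>k. \<exists>m. maximal_left_ideal R m \<and> \<not> chn k \<subseteq> m" by blast
  have strict: "\<not> chn k \<subseteq> chn (Suc k)" for k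
  proof -
    define m where "m = (SOME m. maximal_left_ideal R m \<and> \<not> chn k \<subseteq> m)"
    have "maximal_left_ideal R m \<and> \<not> chn k \<subseteq> m" unfolding m_def using ex[of k] by (rule someI_ex)
    moreover have "chn (Suc k) = chn k \<inter> m" unfolding chn_Suc nxt_def m_def using ex[of k] by simp
    ultimately show ?thesis by blast
  qed
  have dec: "chn (Suc k) \<subseteq> chn k" for k
    unfolding chn_Suc nxt_def by auto
  define img where "img k = (\<lambda>a. JR +> a) ` chn k" for k
  have "\<exists>N. \<forall>n\<ge>N. img n = img N"
    using sl unfolding semilocal_def left_artinian_def
  proof (elim allE impE)
    show "(\<forall>n. submodule (R Quot JR) (regular_module (R Quot JR)) (img n)) \<and> (\<forall>n. img (Suc n) \<subseteq> img n)"
      unfolding img_def using img_lid good_chn[OF ar] dec by blast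
  qed
  then obtain N where N0: "\<forall>n\<ge>N. img n = img N" by blast
  have N: "img (Suc N) = img N" by (rule N0[rule_format]) simp
  have g: "good (chn (Suc N))" by (rule good_chn[OF ar])
  have L: "submodule R (regular_module R) (chn (Suc N))" and JL: "JR \<subseteq> chn (Suc N)"
    using g unfolding good_def by auto
  have aJ: "additive_subgroup JR R" by (rule lideal_addsub[OF J_lid])
  have "chn N \<subseteq> chn (Suc N)"
  proof
    fix a assume a: "a \<in> chn N"
    have ac: "a \<in> carrier R" using a lid_facts(1) good_chn[OF ar, of N] unfolding good_def by blast
    have "JR +> a \<in> img (Suc N)" using N a unfolding img_def by blast
    then obtain b where b: "b \<in> chn (Suc N)" "JR +> a = JR +> b" unfolding img_def by blast
    have bc: "b \<in> carrier R" using b(1) lid_facts(1)[OF L] by blast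
    have "a \<ominus> b \<in> JR" using rcos_eq[OF aJ ac bc] b(2) by simp
    then have "a \<ominus> b \<in> chn (Suc N)" using JL by blast
    then have "(a \<ominus> b) \<oplus> b \<in> chn (Suc N)" using lid_facts(3)[OF L] b(1) by blast
    moreover have "(a \<ominus> b) \<oplus> b = a" using ac bc by (simp add: a_minus_def a_assoc l_neg)
    ultimately show "a \<in> chn (Suc N)" by simp
  qed
  then show False using strict by blast
qed

lemma dir1:
  assumes ar: "left_arithmetical R" and sl: "semilocal R"
  shows "finite (carrier (R Quot JR)) \<and> fin_gen_submodule R (regular_module R) JR"
proof -
  obtain k where k: "\<forall>m. maximal_left_ideal R m \<longrightarrow> chn k \<subseteq> m" using chain_ends[OF ar sl] by blast
  have g: "good (chn k)" by (rule good_chn[OF ar])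
  have "chn k \<subseteq> carrier R" using g lid_facts(1) unfolding good_def by blast
  then have "chn k \<subseteq> JR" using k unfolding jacobson_radical_def by blast
  moreover have "JR \<subseteq> chn k" using g unfolding good_def by blast
  ultimately have e: "chn k = JR" by blast
  then have gJ: "good JR" using g by simp
  then have "fin_gen_submodule R (regular_module R) JR" "finite ((\<lambda>a. JR +> a) ` carrier R)"
    unfolding good_def by auto
  then show ?thesis using quot_carrier[of JR] by simp
qed

end

theorem proposition2p2:
  fixes A :: "('a, 'm) ring_scheme"
  assumes "ring A"
  shows "(left_arithmetical A \<and> semilocal A) \<longleftrightarrow>
    (finite (carrier (A Quot jacobson_radical A)) \<and>
     fin_gen_submodule A (regular_module A) (jacobson_radical A))"
  using ring.dir1[OF assms] ring.dir2[OF assms] by blast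


end
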